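(* Let $E$ be a finite set and $\mathcal{A}$ a set-arrangement on $E$, with local Lie algebras $L_A=\mathcal{F}(A)/\langle R_A\rangle$, $R_A\subseteq[\mathcal{F}(A),\mathcal{F}(A)]$, for $A\in\mathcal{A}$, and let $\mathcal{L}=\mathcal{F}(E)/\langle R\rangle$ with $$R=\bigcup_{A\in\mathcal{A}}R_A\ \cup\ \{[x,y]:\ x,y\in E,\ \{x,y\}\not\subseteq A \text{ for every } A\in\mathcal{A}\}.$$ Assume $\mathcal{L}$ satisfies replacement. Let $\mathcal{B}_1,\dots,\mathcal{B}_k$ be pairwise disjoint subsets of $\mathcal{A}$, each closed in $\mathcal{A}$, with $\bigcup_{i=1}^k\mathcal{B}_i=\mathcal{A}$. For each $i$ let $\pi_{\mathcal{B}_i}:\mathcal{L}\to L_{\mathcal{B}_i}$ be the Lie homomorphism sending the elements of $E\setminus\mathrm{supp}(\mathcal{B}_i)$ to $0$ and fixing those of $\mathrm{supp}(\mathcal{B}_i)$, let $I_{\mathcal{B}_i}=\ker\pi_{\mathcal{B}_i}$, and let $J$ be the kernel of the surjective Lie homomorphism $\bigoplus_{i=1}^k\pi'_{\mathcal{B}_i}:\mathcal{L}'\to\bigoplus_{i=1}^kL'_{\mathcal{B}_i}$, where $\pi'_{\mathcal{B}_i}$ is the restriction of $\pi_{\mathcal{B}_i}$ to $\mathcal{L}'$. Then: (1) $J$ is generated as an ideal of $\mathcal{L}$ by the elements $[x,[y,z]]$ with $y,z\in\mathrm{supp}(\mathcal{B}_i)$, $x\in E\setminus\mathrm{supp}(\mathcal{B}_i)$,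 $i=1,\dots,k$; (2) $J=0$ if and only if $[x,[y,z]]=0$ in $\mathcal{L}$ for all $y,z\in\mathrm{supp}(\mathcal{B}_i)$, $x\in E\setminus\mathrm{supp}(\mathcal{B}_i)$, $i=1,\dots,k$; (3) for each $i=1,\dots,k$, $I_{\mathcal{B}_i}$ equals the Lie subalgebra of $\mathcal{L}$ generated by $E\setminus\mathrm{supp}(\mathcal{B}_i)$.
   Context: All Lie algebras are over a fixed field; $\mathcal{F}(X)$ is the free Lie algebra on $X$, $\langle S\rangle$ the ideal generated by $S$, and $M'=[M,M]$ the derived algebra. A set-arrangement on a finite set $E$ is a set $\mathcal{A}$ of subsets of $E$ with $|A|\ge3$ for all $A\in\mathcal{A}$ and $|A\cap B|\le1$ for distinct $A,B\in\mathcal{A}$. $\mathcal{L}$ satisfies replacement if for every $A\in\mathcal{A}$ and every $x\in A$ that also lies in some $B\in\mathcal{A}$ with $B\ne A$, one has $L_A'\subseteq$ the Lie subalgebra of $L_A$ generated by $A\setminus\{x\}$. For $\mathcal{B}\subseteq\mathcal{A}$ put $\mathrm{supp}(\mathcal{B})=\bigcup_{B\in\mathcal{B}}B$; $\mathcal{B}$ is closed in $\mathcal{A}$ if $|A\cap\mathrm{supp}(\mathcal{B})|\le1$ for all $A\in\mathcal{A}\setminus\mathcal{B}$. For such $\mathcal{B}$, $L_{\mathcal{B}}=\mathcal{F}(\mathrm{supp}(\mathcal{B}))/\langle R_{\mathcal{B}}\rangle$ where $R_{\mathcal{B}}=\bigcup_{B\in\mathcal{B}}R_B\cup\{[x,y]:\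 x,y\in\mathrm{supp}(\mathcal{B}),\ \{x,y\}\not\subseteq B\text{ for all }B\in\mathcal{B}\}$. Elements of $E$ are identified with their images in $\mathcal{L}$. *)

theory Defs
  imports Main
begin

text \<open>Elements of the finitely presented
Lie algebra F(X)/<R> are represented by terms with variables in X, modulo the congruence
lie_cong R generated by the Lie algebra axioms and the relations r = 0 for r in R.\<close>

datatype ('k, 'x) lterm =
    LV 'x
  | LZero
  | LAdd "('k, 'x) lterm" "('k, 'x) lterm"
  | LSmul 'k "('k, 'x) lterm"
  | LBr "('k, 'x) lterm" "('k, 'x) lterm"

fun lvars :: "('k, 'x) lterm \<Rightarrow> 'x set" where
  "lvars (LV x) = {x}"
| "lvars LZero = {}"
| "lvars (LAdd s t) = lvars s \<union> lvars t"
| "lvars (LSmul a t) = lvars t"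
| "lvars (LBr s t) = lvars s \<union> lvars t"

inductive lie_cong :: "('k::field, 'x) lterm set \<Rightarrow> ('k, 'x) lterm \<Rightarrow> ('k, 'x) lterm \<Rightarrow> bool"
  for R :: "('k, 'x) lterm set" where
  refl: "lie_cong R t t"
| sym: "lie_cong R s t \<Longrightarrow> lie_cong R t s"
| trans: "lie_cong R s t \<Longrightarrow> lie_cong R t u \<Longrightarrow> lie_cong R s u"
| cong_add: "lie_cong R s s' \<Longrightarrow> lie_cong R t t' \<Longrightarrow> lie_cong R (LAdd s t) (LAdd s' t')"
| cong_smul: "lie_cong R t t' \<Longrightarrow> lie_cong R (LSmul a t) (LSmul a t')"
| cong_br: "lie_cong R s s' \<Longrightarrow> lie_cong R t t' \<Longrightarrow> lie_cong R (LBr s t) (LBr s' t')"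
| add_assoc: "lie_cong R (LAdd (LAdd s t) u) (LAdd s (LAdd t u))"
| add_comm: "lie_cong R (LAdd s t) (LAdd t s)"
| add_zero: "lie_cong R (LAdd t LZero) t"
| add_neg: "lie_cong R (LAdd t (LSmul (-1) t)) LZero"
| smul_smul: "lie_cong R (LSmul a (LSmul b t)) (LSmul (a * b) t)"
| smul_one: "lie_cong R (LSmul 1 t) t"
| smul_add: "lie_cong R (LSmul a (LAdd s t)) (LAdd (LSmul a s) (LSmul a t))"
| add_smul: "lie_cong R (LSmul (a + b) t) (LAdd (LSmul a t) (LSmul b t))"
| br_add_left: "lie_cong R (LBr (LAdd s t) u) (LAdd (LBr s u) (LBr t u))"
| br_add_right: "lie_cong R (LBr s (LAdd t u)) (LAdd (LBr s t) (LBr s u))"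
| br_smul_left: "lie_cong R (LBr (LSmul a s) t) (LSmul a (LBr s t))"
| br_smul_right: "lie_cong R (LBr s (LSmul a t)) (LSmul a (LBr s t))"
| br_alt: "lie_cong R (LBr t t) LZero"
| jacobi: "lie_cong R (LAdd (LBr x (LBr y z)) (LAdd (LBr y (LBr z x)) (LBr z (LBr x y)))) LZero"
| rel: "r \<in> R \<Longrightarrow> lie_cong R r LZero"

fun killout :: "'x set \<Rightarrow> ('k, 'x) lterm \<Rightarrow> ('k, 'x) lterm" where
  "killout S (LV x) = (if x \<in> S then LV x else LZero)"
| "killout S LZero = LZero"
| "killout S (LAdd s t) = LAdd (killout S s) (killout S t)"
| "killout S (LSmul a t) = LSmul a (killout S t)"
| "killout S (LBr s t) = LBr (killout S s) (killout S t)"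

text \<open>Linear span of brackets of terms over X (represents [F(X),F(X)]).\<close>
inductive_set brspan :: "'x set \<Rightarrow> ('k, 'x) lterm set" for X where
  "lvars s \<subseteq> X \<Longrightarrow> lvars t \<subseteq> X \<Longrightarrow> LBr s t \<in> brspan X"
| "LZero \<in> brspan X"
| "s \<in> brspan X \<Longrightarrow> t \<in> brspan X \<Longrightarrow> LAdd s t \<in> brspan X"
| "t \<in> brspan X \<Longrightarrow> LSmul a t \<in> brspan X"

definition derived :: "('k::field, 'x) lterm set \<Rightarrow> 'x set \<Rightarrow> ('k, 'x) lterm set" where
  "derived R X = {t. lvars t \<subseteq> X \<and> (\<exists>s \<in> brspan X. lie_cong R t s)}"

definition subalg_gen :: "('k::field, 'x) lterm set \<Rightarrow> 'x set \<Rightarrow> 'x set \<Rightarrow> ('k, 'x) lterm set" where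
  "subalg_gen R X Y = {t. lvars t \<subseteq> X \<and> (\<exists>s. lvars s \<subseteq> Y \<and> lie_cong R t s)}"

inductive_set idspan :: "'x set \<Rightarrow> ('k, 'x) lterm set \<Rightarrow> ('k, 'x) lterm set" for X G where
  "g \<in> G \<Longrightarrow> g \<in> idspan X G"
| "LZero \<in> idspan X G"
| "s \<in> idspan X G \<Longrightarrow> t \<in> idspan X G \<Longrightarrow> LAdd s t \<in> idspan X G"
| "t \<in> idspan X G \<Longrightarrow> LSmul a t \<in> idspan X G"
| "lvars u \<subseteq> X \<Longrightarrow> s \<in> idspan X G \<Longrightarrow> LBr u s \<in> idspan X G"
| "lvars u \<subseteq> X \<Longrightarrow> s \<in> idspan X G \<Longrightarrow> LBr s u \<in> idspan X G"

definition ideal_gen :: "('k::field, 'x) lterm set \<Rightarrow> 'x set \<Rightarrow> ('k, 'x) lterm set \<Rightarrow> ('k, 'x) lterm set" where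
  "ideal_gen R X G = {t. lvars t \<subseteq> X \<and> (\<exists>s \<in> idspan X G. lie_cong R t s)}"

definition set_arrangement :: "'x set \<Rightarrow> 'x set set \<Rightarrow> bool" where
  "set_arrangement E \<A> \<longleftrightarrow> (\<forall>A\<in>\<A>. A \<subseteq> E \<and> card A \<ge> 3) \<and>
     (\<forall>A\<in>\<A>. \<forall>B\<in>\<A>. A \<noteq> B \<longrightarrow> card (A \<inter> B) \<le> 1)"

definition supp :: "'x set set \<Rightarrow> 'x set" where
  "supp \<B> = \<Union>\<B>"

definition closed_in_arr :: "'x set set \<Rightarrow> 'x set set \<Rightarrow> bool" where
  "closed_in_arr \<B> \<A> \<longleftrightarrow> \<B> \<subseteq> \<A> \<and> (\<forall>A \<in> \<A> - \<B>. card (A \<inter> supp \<B>) \<le> 1)"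

definition pres_rels :: "'x set \<Rightarrow> 'x set set \<Rightarrow> ('x set \<Rightarrow> ('k, 'x) lterm set) \<Rightarrow> ('k, 'x) lterm set" where
  "pres_rels X \<B> RA = (\<Union>B\<in>\<B>. RA B) \<union>
     {LBr (LV x) (LV y) | x y. x \<in> X \<and> y \<in> X \<and> (\<forall>B\<in>\<B>. \<not> {x, y} \<subseteq> B)}"

definition replacement :: "'x set set \<Rightarrow> ('x set \<Rightarrow> ('k::field, 'x) lterm set) \<Rightarrow> bool" where
  "replacement \<A> RA \<longleftrightarrow> (\<forall>A\<in>\<A>. \<forall>x\<in>A. (\<exists>B\<in>\<A>. B \<noteq> A \<and> x \<in> B) \<longrightarrow>
      derived (RA A) A \<subseteq> subalg_gen (RA A) A (A - {x}))"

definition proj_kernel :: "'x set \<Rightarrow> ('x set \<Rightarrow> ('k::field, 'x) lterm set) \<Rightarrow> 'x set set \<Rightarrow> ('k, 'x) lterm set" where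
  "proj_kernel E RA \<B> = {t. lvars t \<subseteq> E \<and>
     lie_cong (pres_rels (supp \<B>) \<B> RA) (killout (supp \<B>) t) LZero}"

end

theory Submission
  imports Defs
begin


lemma lc_trans[trans]: "lie_cong R a b \<Longrightarrow> lie_cong R b c \<Longrightarrow> lie_cong R a c"
  by (rule lie_cong.trans)

lemmas lc_sym = lie_cong.sym
lemmas lc_refl = lie_cong.refl

lemma lc_add_zero_l: "lie_cong R (LAdd LZero t) t"
  by (rule lc_trans[OF lie_cong.add_comm lie_cong.add_zero])

lemma lc_smul_zero: "lie_cong R (LSmul 0 t) LZero"
proof -
  have "LSmul 0 t = LSmul (1 + -1) t" by simp
  also have "lie_cong R (LSmul (1 + -1) t) (LAdd (LSmul 1 t) (LSmul (-1) t))"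
    by (rule lie_cong.add_smul)
  also have "lie_cong R \<dots> (LAdd t (LSmul (-1) t))"
    by (intro lie_cong.cong_add lie_cong.smul_one lie_cong.refl)
  also have "lie_cong R \<dots> LZero" by (rule lie_cong.add_neg)
  finally show ?thesis .
qed

lemma lc_smul_LZero: "lie_cong R (LSmul a LZero) LZero"
proof -
  have "lie_cong R (LSmul a LZero) (LSmul a (LSmul 0 LZero))"
    by (rule lie_cong.cong_smul, rule lc_sym, rule lc_smul_zero)
  also have "lie_cong R \<dots> (LSmul (a*0) LZero)" by (rule lie_cong.smul_smul)
  also have "(LSmul (a*0) LZero) = LSmul 0 LZero" by simp
  also have "lie_cong R \<dots> LZero" by (rule lc_smul_zero)
  finally show ?thesis .
qed

lemma lc_br_zero_l: "lie_cong R (LBr LZero t) LZero"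
proof -
  have "lie_cong R (LBr LZero t) (LBr (LSmul 0 LZero) t)"
    by (rule lie_cong.cong_br, rule lc_sym, rule lc_smul_zero, rule lc_refl)
  also have "lie_cong R \<dots> (LSmul 0 (LBr LZero t))" by (rule lie_cong.br_smul_left)
  also have "lie_cong R \<dots> LZero" by (rule lc_smul_zero)
  finally show ?thesis .
qed

lemma lc_br_zero_r: "lie_cong R (LBr t LZero) LZero"
proof -
  have "lie_cong R (LBr t LZero) (LBr t (LSmul 0 LZero))"
    by (rule lie_cong.cong_br, rule lc_refl, rule lc_sym, rule lc_smul_zero)
  also have "lie_cong R \<dots> (LSmul 0 (LBr t LZero))" by (rule lie_cong.br_smul_right)
  also have "lie_cong R \<dots> LZero" by (rule lc_smul_zero)
  finally show ?thesis .
qed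

lemma lc_add_assoc': "lie_cong R (LAdd s (LAdd t u)) (LAdd (LAdd s t) u)"
  by (rule lc_sym, rule lie_cong.add_assoc)

lemma lc_neg_unique:
  assumes "lie_cong R (LAdd u v) LZero"
  shows "lie_cong R u (LSmul (-1) v)"
proof -
  have "lie_cong R u (LAdd u LZero)" by (rule lc_sym, rule lie_cong.add_zero)
  also have "lie_cong R \<dots> (LAdd u (LAdd v (LSmul (-1) v)))"
    by (rule lie_cong.cong_add, rule lc_refl, rule lc_sym, rule lie_cong.add_neg)
  also have "lie_cong R \<dots> (LAdd (LAdd u v) (LSmul (-1) v))" by (rule lc_add_assoc')
  also have "lie_cong R \<dots> (LAdd LZero (LSmul (-1) v))"
    by (intro lie_cong.cong_add assms lc_refl)
  also have "lie_cong R \<dots> (LSmul (-1) v)" by (rule lc_add_zero_l)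
  finally show ?thesis .
qed

lemma lc_neg_neg: "lie_cong R (LSmul (-1) (LSmul (-1) t)) t"
proof -
  have "lie_cong R (LSmul (-1) (LSmul (-1) t)) (LSmul ((-1)*(-1)) t)" by (rule lie_cong.smul_smul)
  also have "(LSmul ((-1)*(-1)) t) = LSmul 1 t" by simp
  also have "lie_cong R \<dots> t" by (rule lie_cong.smul_one)
  finally show ?thesis .
qed

lemma lc_antisym: "lie_cong R (LBr a b) (LSmul (-1) (LBr b a))"
proof (rule lc_neg_unique)
  have "lie_cong R (LAdd (LBr a b) (LBr b a)) (LAdd (LAdd LZero (LBr a b)) (LAdd (LBr b a) LZero))"
    by (rule lie_cong.cong_add, rule lc_sym, rule lc_add_zero_l, rule lc_sym, rule lie_cong.add_zero)
  also have "lie_cong R \<dots> (LAdd (LAdd (LBr a a) (LBr a b)) (LAdd (LBr b a) (LBr b b)))"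
    by (rule lie_cong.cong_add, rule lie_cong.cong_add, rule lc_sym, rule lie_cong.br_alt, rule lc_refl, rule lie_cong.cong_add, rule lc_refl, rule lc_sym, rule lie_cong.br_alt)
  also have "lie_cong R \<dots> (LAdd (LBr a (LAdd a b)) (LBr b (LAdd a b)))"
    by (rule lie_cong.cong_add, rule lc_sym, rule lie_cong.br_add_right, rule lc_sym, rule lie_cong.br_add_right)
  also have "lie_cong R \<dots> (LBr (LAdd a b) (LAdd a b))"
    by (rule lc_sym, rule lie_cong.br_add_left)
  also have "lie_cong R \<dots> LZero" by (rule lie_cong.br_alt)
  finally show "lie_cong R (LAdd (LBr a b) (LBr b a)) LZero" .
qed

lemma lc_neg_add: "lie_cong R (LSmul (-1) (LAdd u v)) (LAdd (LSmul (-1) u) (LSmul (-1) v))"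
  by (rule lie_cong.smul_add)

lemma lc_jacobi2: "lie_cong R (LBr x (LBr y z)) (LAdd (LBr (LBr x y) z) (LBr y (LBr x z)))"
proof -
  have "lie_cong R (LBr x (LBr y z)) (LSmul (-1) (LAdd (LBr y (LBr z x)) (LBr z (LBr x y))))"
    by (intro lc_neg_unique lie_cong.jacobi)
  also have "lie_cong R \<dots> (LAdd (LSmul (-1) (LBr y (LBr z x))) (LSmul (-1) (LBr z (LBr x y))))"
    by (rule lc_neg_add)
  also have "lie_cong R \<dots> (LAdd (LBr y (LSmul (-1) (LBr z x))) (LBr (LBr x y) z))"
  proof (intro lie_cong.cong_add)
    show "lie_cong R (LSmul (-1) (LBr y (LBr z x))) (LBr y (LSmul (-1) (LBr z x)))"
      by (rule lc_sym, rule lie_cong.br_smul_right)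
    show "lie_cong R (LSmul (-1) (LBr z (LBr x y))) (LBr (LBr x y) z)"
      by (rule lc_sym, rule lc_antisym)
  qed
  also have "lie_cong R \<dots> (LAdd (LBr y (LBr x z)) (LBr (LBr x y) z))"
    by (rule lie_cong.cong_add, rule lie_cong.cong_br, rule lc_refl, rule lc_sym, rule lc_antisym, rule lc_refl)
  also have "lie_cong R \<dots> (LAdd (LBr (LBr x y) z) (LBr y (LBr x z)))"
    by (rule lie_cong.add_comm)
  finally show ?thesis .
qed

lemma lc_br_left_expand:
  "lie_cong R (LBr (LBr a b) c) (LAdd (LBr a (LBr b c)) (LSmul (-1) (LBr b (LBr a c))))"
proof -
  have j: "lie_cong R (LBr a (LBr b c)) (LAdd (LBr (LBr a b) c) (LBr b (LBr a c)))"
    by (rule lc_jacobi2)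
  have "lie_cong R (LBr (LBr a b) c) (LAdd (LBr (LBr a b) c) LZero)"
    by (rule lc_sym, rule lie_cong.add_zero)
  also have "lie_cong R \<dots> (LAdd (LBr (LBr a b) c) (LAdd (LBr b (LBr a c)) (LSmul (-1) (LBr b (LBr a c)))))"
    by (rule lie_cong.cong_add, rule lc_refl, rule lc_sym, rule lie_cong.add_neg)
  also have "lie_cong R \<dots> (LAdd (LAdd (LBr (LBr a b) c) (LBr b (LBr a c))) (LSmul (-1) (LBr b (LBr a c))))"
    by (rule lc_add_assoc')
  also have "lie_cong R \<dots> (LAdd (LBr a (LBr b c)) (LSmul (-1) (LBr b (LBr a c))))"
    by (rule lie_cong.cong_add, rule lc_sym, rule j, rule lc_refl)
  finally show ?thesis .
qed



lemma lc_zero_add: assumes "lie_cong R a LZero" "lie_cong R b LZero" shows "lie_cong R (LAdd a b) LZero"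
  using lc_trans[OF lie_cong.cong_add[OF assms] lie_cong.add_zero] .

lemma lc_zero_smul: assumes "lie_cong R a LZero" shows "lie_cong R (LSmul c a) LZero"
  using lc_trans[OF lie_cong.cong_smul[OF assms] lc_smul_LZero] .

lemma lc_mono:
  assumes "\<forall>r\<in>R1. lie_cong R2 r LZero" and "lie_cong R1 a b" shows "lie_cong R2 a b"
  using assms(2)
proof (induction rule: lie_cong.induct)
  case (rel r) then show ?case using assms(1) by blast
qed (rule lie_cong.intros; assumption)+

lemma killout_id: "lvars t \<subseteq> S \<Longrightarrow> killout S t = t"
  by (induction t) auto

lemma lvars_killout: "lvars (killout S t) \<subseteq> lvars t \<inter> S"
  by (induction t) auto

lemma killout_cong:
  assumes "\<forall>r\<in>R1. lie_cong R2 (killout S r) LZero" and "lie_cong R1 a b"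
  shows "lie_cong R2 (killout S a) (killout S b)"
  using assms(2)
proof (induction rule: lie_cong.induct)
  case (rel r) then show ?case using assms(1) by simp
qed ((simp only: killout.simps)?, (rule lie_cong.intros; assumption))+

lemma novars_zero: "lvars t = {} \<Longrightarrow> lie_cong R t LZero"
proof (induction t)
  case (LV x) then show ?case by simp
next
  case LZero show ?case by (rule lie_cong.refl)
next
  case (LAdd t1 t2) then show ?case by (simp add: lc_zero_add)
next
  case (LSmul a t)
  then have "lie_cong R (LSmul a t) (LSmul a LZero)" by (simp add: lie_cong.cong_smul)
  then show ?case by (rule lc_trans[OF _ lc_smul_LZero])
next
  case (LBr t1 t2)
  then have "lie_cong R (LBr t1 t2) (LBr LZero t2)" by (simp add: lie_cong.cong_br lie_cong.refl)
  then show ?case by (rule lc_trans[OF _ lc_br_zero_l])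
qed

lemma killout_disj_zero: "lvars t \<inter> S = {} \<Longrightarrow> lie_cong R (killout S t) LZero"
proof -
  assume "lvars t \<inter> S = {}"
  then have "lvars (killout S t) = {}" using lvars_killout[of S t] by blast
  then show ?thesis by (rule novars_zero)
qed

lemma lvars_brspan: "t \<in> brspan V \<Longrightarrow> lvars t \<subseteq> V"
  by (induction rule: brspan.induct) auto

lemma killout_brspan: "t \<in> brspan V \<Longrightarrow> killout S t \<in> brspan (V \<inter> S)"
proof (induction rule: brspan.induct)
  case (1 s t)
  then show ?case using lvars_killout[of S s] lvars_killout[of S t]
    by (auto intro!: brspan.intros)
qed (auto intro: brspan.intros)

lemma commuting_gen:
  assumes comm: "\<forall>a\<in>V. \<forall>b\<in>V. a \<noteq> b \<longrightarrow> lie_cong R (LBr (LV a) (LV b)) LZero"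
    and a: "a \<in> V" and u: "lvars u \<subseteq> V"
  shows "lie_cong R (LBr (LV a) u) LZero"
  using u
proof (induction u)
  case (LV b) then show ?case using comm a by (cases "a = b") (auto intro: lie_cong.br_alt)
next
  case LZero show ?case by (rule lc_br_zero_r)
next
  case (LAdd u1 u2)
  then have "lie_cong R (LBr (LV a) u1) LZero" "lie_cong R (LBr (LV a) u2) LZero" by auto
  then show ?case by (rule lc_trans[OF lie_cong.br_add_right lc_zero_add])
next
  case (LSmul c u)
  then have "lie_cong R (LBr (LV a) u) LZero" by auto
  then show ?case by (rule lc_trans[OF lie_cong.br_smul_right lc_zero_smul])
next
  case (LBr u1 u2)
  then have h1: "lie_cong R (LBr (LV a) u1) LZero" and h2: "lie_cong R (LBr (LV a) u2) LZero" by auto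
  have "lie_cong R (LBr (LV a) (LBr u1 u2)) (LAdd (LBr (LBr (LV a) u1) u2) (LBr u1 (LBr (LV a) u2)))"
    by (rule lc_jacobi2)
  also have "lie_cong R \<dots> (LAdd (LBr LZero u2) (LBr u1 LZero))"
    by (intro lie_cong.cong_add lie_cong.cong_br h1 h2 lie_cong.refl)
  also have "lie_cong R \<dots> LZero" by (intro lc_zero_add lc_br_zero_l lc_br_zero_r)
  finally show ?case .
qed

lemma commuting_br:
  assumes comm: "\<forall>a\<in>V. \<forall>b\<in>V. a \<noteq> b \<longrightarrow> lie_cong R (LBr (LV a) (LV b)) LZero"
    and s: "lvars s \<subseteq> V" and u: "lvars u \<subseteq> V"
  shows "lie_cong R (LBr s u) LZero"
  using s u
proof (induction s arbitrary: u)
  case (LV x) then show ?case using commuting_gen[OF comm] by simp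
next
  case LZero show ?case by (rule lc_br_zero_l)
next
  case (LAdd s1 s2)
  then have "lie_cong R (LBr s1 u) LZero" "lie_cong R (LBr s2 u) LZero" by auto
  then show ?case by (rule lc_trans[OF lie_cong.br_add_left lc_zero_add])
next
  case (LSmul c s)
  then have "lie_cong R (LBr s u) LZero" by auto
  then show ?case by (rule lc_trans[OF lie_cong.br_smul_left lc_zero_smul])
next
  case (LBr s1 s2)
  then have "lie_cong R (LBr s1 s2) LZero" by auto
  then have "lie_cong R (LBr (LBr s1 s2) u) (LBr LZero u)" by (intro lie_cong.cong_br lie_cong.refl)
  then show ?case by (rule lc_trans[OF _ lc_br_zero_l])
qed

lemma commuting_brspan:
  assumes comm: "\<forall>a\<in>V. \<forall>b\<in>V. a \<noteq> b \<longrightarrow> lie_cong R (LBr (LV a) (LV b)) LZero"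
    and t: "t \<in> brspan V"
  shows "lie_cong R t LZero"
  using t
proof (induction rule: brspan.induct)
  case (1 s t) then show ?case using commuting_br[OF comm] by blast
next
  case 2 show ?case by (rule lie_cong.refl)
next
  case (3 s t) from 3(3,4) show ?case by (rule lc_zero_add)
next
  case (4 t a) from 4(2) show ?case by (rule lc_zero_smul)
qed



definition subsp :: "('k::field, 'x) lterm set \<Rightarrow> bool" where
  "subsp M \<longleftrightarrow> LZero \<in> M \<and> (\<forall>a\<in>M. \<forall>b\<in>M. LAdd a b \<in> M) \<and> (\<forall>c a. a \<in> M \<longrightarrow> LSmul c a \<in> M)"

definition cl :: "('k::field, 'x) lterm set \<Rightarrow> ('k, 'x) lterm set \<Rightarrow> ('k, 'x) lterm set" where
  "cl R M = {t. \<exists>q\<in>M. lie_cong R t q}"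

definition csd :: "('k::field, 'x) lterm set \<Rightarrow> ('k, 'x) lterm set \<Rightarrow> bool" where
  "csd R C \<longleftrightarrow> LZero \<in> C \<and> (\<forall>a\<in>C. \<forall>b\<in>C. LAdd a b \<in> C) \<and> (\<forall>c a. a \<in> C \<longrightarrow> LSmul c a \<in> C)
     \<and> (\<forall>a b. lie_cong R a b \<longrightarrow> b \<in> C \<longrightarrow> a \<in> C)"

lemma csd_zero: "csd R C \<Longrightarrow> LZero \<in> C" unfolding csd_def by blast
lemma csd_add: "csd R C \<Longrightarrow> a \<in> C \<Longrightarrow> b \<in> C \<Longrightarrow> LAdd a b \<in> C" unfolding csd_def by blast
lemma csd_smul: "csd R C \<Longrightarrow> a \<in> C \<Longrightarrow> LSmul c a \<in> C" unfolding csd_def by blast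
lemma csd_cong: "csd R C \<Longrightarrow> lie_cong R a b \<Longrightarrow> b \<in> C \<Longrightarrow> a \<in> C" unfolding csd_def by blast

lemma csd_addneg: "csd R C \<Longrightarrow> a \<in> C \<Longrightarrow> b \<in> C \<Longrightarrow> LAdd a (LSmul (-1) b) \<in> C"
  by (intro csd_add csd_smul)

lemma csd_zero_cong: "csd R C \<Longrightarrow> lie_cong R a LZero \<Longrightarrow> a \<in> C"
  by (rule csd_cong, assumption+, rule csd_zero)

lemma cl_incl: "M \<subseteq> cl R M" unfolding cl_def by (auto intro: lie_cong.refl)

lemma cl_mono: "M \<subseteq> M' \<Longrightarrow> cl R M \<subseteq> cl R M'" unfolding cl_def by blast

lemma cl_cong_mem: "lie_cong R t q \<Longrightarrow> q \<in> M \<Longrightarrow> t \<in> cl R M" unfolding cl_def by blast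

lemma csd_cl: assumes "subsp M" shows "csd R (cl R M)"
  unfolding csd_def
proof (intro conjI allI ballI impI)
  show "LZero \<in> cl R M" using assms unfolding subsp_def cl_def by (auto intro: lie_cong.refl)
next
  fix a b assume "a \<in> cl R M" "b \<in> cl R M"
  then obtain qa qb where "qa \<in> M" "qb \<in> M" "lie_cong R a qa" "lie_cong R b qb" unfolding cl_def by blast
  then show "LAdd a b \<in> cl R M" using assms unfolding subsp_def cl_def
    by (blast intro: lie_cong.cong_add)
next
  fix c a assume "a \<in> cl R M"
  then obtain qa where "qa \<in> M" "lie_cong R a qa" unfolding cl_def by blast
  then show "LSmul c a \<in> cl R M" using assms unfolding subsp_def cl_def
    by (blast intro: lie_cong.cong_smul)
next
  fix a b assume "lie_cong R a b" "b \<in> cl R M"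
  then show "a \<in> cl R M" unfolding cl_def by (blast intro: lc_trans)
qed

lemma subsp_over: "subsp {t. lvars t \<subseteq> V}" unfolding subsp_def by auto

lemma subsp_idspan: "subsp (idspan X G)" unfolding subsp_def by (auto intro: idspan.intros)

lemma subsp_brspan: "subsp (brspan V)" unfolding subsp_def by (auto intro: brspan.intros)

lemma csd_br_right: assumes "csd R C" shows "csd R {m. \<forall>X\<in>W. LBr X m \<in> C}"
  unfolding csd_def
proof (intro conjI allI ballI impI; simp)
  show "\<forall>X\<in>W. LBr X LZero \<in> C" using assms by (blast intro: csd_zero_cong lc_br_zero_r)
next
  fix a b assume a: "\<forall>X\<in>W. LBr X a \<in> C" and b: "\<forall>X\<in>W. LBr X b \<in> C"
  show "\<forall>X\<in>W. LBr X (LAdd a b) \<in> C"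
  proof
    fix X assume "X \<in> W"
    then show "LBr X (LAdd a b) \<in> C" using a b assms
      by (blast intro: csd_cong[OF assms lie_cong.br_add_right] csd_add)
  qed
next
  fix c a assume a: "\<forall>X\<in>W. LBr X a \<in> C"
  show "\<forall>X\<in>W. LBr X (LSmul c a) \<in> C"
  proof
    fix X assume "X \<in> W"
    then show "LBr X (LSmul c a) \<in> C" using a assms
      by (blast intro: csd_cong[OF assms lie_cong.br_smul_right] csd_smul)
  qed
next
  fix a b assume ab: "lie_cong R a b" and b: "\<forall>X\<in>W. LBr X b \<in> C"
  show "\<forall>X\<in>W. LBr X a \<in> C"
  proof
    fix X assume "X \<in> W"
    have "lie_cong R (LBr X a) (LBr X b)" by (rule lie_cong.cong_br[OF lie_cong.refl ab])
    then show "LBr X a \<in> C" using b \<open>X \<in> W\<close> csd_cong[OF assms] by blast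
  qed
qed

lemma csd_br_left: assumes "csd R C" shows "csd R {m. \<forall>X\<in>W. LBr m X \<in> C}"
  unfolding csd_def
proof (intro conjI allI ballI impI; simp)
  show "\<forall>X\<in>W. LBr LZero X \<in> C" using assms by (blast intro: csd_zero_cong lc_br_zero_l)
next
  fix a b assume a: "\<forall>X\<in>W. LBr a X \<in> C" and b: "\<forall>X\<in>W. LBr b X \<in> C"
  show "\<forall>X\<in>W. LBr (LAdd a b) X \<in> C"
  proof
    fix X assume "X \<in> W"
    then show "LBr (LAdd a b) X \<in> C" using a b assms
      by (blast intro: csd_cong[OF assms lie_cong.br_add_left] csd_add)
  qed
next
  fix c a assume a: "\<forall>X\<in>W. LBr a X \<in> C"
  show "\<forall>X\<in>W. LBr (LSmul c a) X \<in> C"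
  proof
    fix X assume "X \<in> W"
    then show "LBr (LSmul c a) X \<in> C" using a assms
      by (blast intro: csd_cong[OF assms lie_cong.br_smul_left] csd_smul)
  qed
next
  fix a b assume ab: "lie_cong R a b" and b: "\<forall>X\<in>W. LBr b X \<in> C"
  show "\<forall>X\<in>W. LBr a X \<in> C"
  proof
    fix X assume "X \<in> W"
    have "lie_cong R (LBr a X) (LBr b X)" by (rule lie_cong.cong_br[OF ab lie_cong.refl])
    then show "LBr a X \<in> C" using b \<open>X \<in> W\<close> csd_cong[OF assms] by blast
  qed
qed

lemma csd_Int: "csd R C1 \<Longrightarrow> csd R C2 \<Longrightarrow> csd R (C1 \<inter> C2)"
  unfolding csd_def by blast

lemma term_induct_csd:
  assumes C: "csd R C" and gen: "\<And>x. x \<in> V \<Longrightarrow> LV x \<in> C"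
    and br: "\<And>a b. lvars a \<subseteq> V \<Longrightarrow> lvars b \<subseteq> V \<Longrightarrow> a \<in> C \<Longrightarrow> b \<in> C \<Longrightarrow> LBr a b \<in> C"
    and t: "lvars t \<subseteq> V"
  shows "t \<in> C"
  using t
proof (induction t)
  case (LV x) then show ?case using gen by simp
next
  case LZero show ?case using C by (rule csd_zero)
next
  case (LAdd t1 t2) then show ?case using C by (simp add: csd_add)
next
  case (LSmul c t) then show ?case using C by (simp add: csd_smul)
next
  case (LBr t1 t2) then show ?case using br by simp
qed

lemma brspan_induct_csd:
  assumes C: "csd R C" and br: "\<And>a b. lvars a \<subseteq> V \<Longrightarrow> lvars b \<subseteq> V \<Longrightarrow> LBr a b \<in> C"
    and t: "t \<in> brspan V"
  shows "t \<in> C"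
  using t
proof (induction rule: brspan.induct)
  case (1 s t) then show ?case using br by simp
next
  case 2 show ?case using C by (rule csd_zero)
next
  case (3 s t) then show ?case using C by (simp add: csd_add)
next
  case (4 t a) then show ?case using C by (simp add: csd_smul)
qed



lemma lc_add_swap: "lie_cong R (LAdd (LAdd a b) (LAdd c d)) (LAdd (LAdd a c) (LAdd b d))"
proof -
  have "lie_cong R (LAdd (LAdd a b) (LAdd c d)) (LAdd a (LAdd b (LAdd c d)))" by (rule lie_cong.add_assoc)
  also have "lie_cong R \<dots> (LAdd a (LAdd (LAdd b c) d))"
    by (rule lie_cong.cong_add[OF lie_cong.refl lc_add_assoc'])
  also have "lie_cong R \<dots> (LAdd a (LAdd (LAdd c b) d))"
    by (rule lie_cong.cong_add[OF lie_cong.refl lie_cong.cong_add[OF lie_cong.add_comm lie_cong.refl]])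
  also have "lie_cong R \<dots> (LAdd a (LAdd c (LAdd b d)))"
    by (rule lie_cong.cong_add[OF lie_cong.refl lie_cong.add_assoc])
  also have "lie_cong R \<dots> (LAdd (LAdd a c) (LAdd b d))" by (rule lc_add_assoc')
  finally show ?thesis .
qed

locale arr_setup =
  fixes E :: "'x set" and AA :: "'x set set"
    and RA :: "'x set \<Rightarrow> ('k::field, 'x) lterm set"
    and k :: nat and BB :: "nat \<Rightarrow> 'x set set"
  assumes finE: "finite E"
    and arr: "set_arrangement E AA"
    and RAder: "\<forall>A\<in>AA. RA A \<subseteq> derived {} A"
    and repl: "replacement AA RA"
    and closed: "\<forall>i<k. closed_in_arr (BB i) AA"
    and disj: "\<forall>i<k. \<forall>j<k. i \<noteq> j \<longrightarrow> BB i \<inter> BB j = {}"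
    and cover: "(\<Union>i<k. BB i) = AA"
begin

abbreviation "RR \<equiv> pres_rels E AA RA"
abbreviation "SS i \<equiv> supp (BB i)"
abbreviation "RB i \<equiv> pres_rels (SS i) (BB i) RA"

lemma A_sub: "A \<in> AA \<Longrightarrow> A \<subseteq> E" using arr unfolding set_arrangement_def by blast

lemma A_fin: "A \<in> AA \<Longrightarrow> finite A"
proof -
  assume "A \<in> AA"
  then have "card A \<ge> 3" using arr unfolding set_arrangement_def by blast
  then show "finite A" using card.infinite by fastforce
qed

lemma A_in_B: "A \<in> AA \<Longrightarrow> \<exists>i<k. A \<in> BB i" using cover by blast

lemma B_sub: "i < k \<Longrightarrow> BB i \<subseteq> AA" using cover by blast

lemma in_S: "A \<in> BB i \<Longrightarrow> A \<subseteq> SS i" unfolding supp_def by blast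

lemma S_sub: "i < k \<Longrightarrow> SS i \<subseteq> E" unfolding supp_def using B_sub A_sub by blast

lemma out_B_card:
  assumes "i < k" "A \<in> AA" "A \<notin> BB i" "y \<in> A" "z \<in> A" "y \<in> SS i" "z \<in> SS i"
  shows "y = z"
proof -
  have "card (A \<inter> SS i) \<le> 1" using closed assms(1-3) unfolding closed_in_arr_def by blast
  moreover have "finite (A \<inter> SS i)" using A_fin[OF assms(2)] by simp
  ultimately have "\<forall>a1\<in>A \<inter> SS i. \<forall>a2\<in>A \<inter> SS i. a1 = a2" using card_le_Suc0_iff_eq by fastforce
  then show ?thesis using assms by blast
qed

lemma RA_vars: "A \<in> AA \<Longrightarrow> r \<in> RA A \<Longrightarrow> lvars r \<subseteq> A \<and> (\<exists>b\<in>brspan A. lie_cong {} r b)"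
  using RAder unfolding derived_def by blast

lemma R_rel_RA: "A \<in> AA \<Longrightarrow> r \<in> RA A \<Longrightarrow> r \<in> RR"
  unfolding pres_rels_def by blast

lemma R_rel_comm: "x \<in> E \<Longrightarrow> y \<in> E \<Longrightarrow> (\<forall>A\<in>AA. \<not> {x,y} \<subseteq> A) \<Longrightarrow> LBr (LV x) (LV y) \<in> RR"
  unfolding pres_rels_def by blast

lemma RB_rels: "i < k \<Longrightarrow> r \<in> RB i \<Longrightarrow> lie_cong RR r LZero"
proof -
  assume i: "i < k" and r: "r \<in> RB i"
  then consider (a) B where "B \<in> BB i" "r \<in> RA B"
    | (b) x y where "r = LBr (LV x) (LV y)" "x \<in> SS i" "y \<in> SS i" "\<forall>B\<in>BB i. \<not> {x, y} \<subseteq> B"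
    unfolding pres_rels_def by blast
  then show "lie_cong RR r LZero"
  proof cases
    case a
    then show ?thesis using B_sub[OF i] R_rel_RA lie_cong.rel by blast
  next
    case b
    show ?thesis
    proof (cases "x = y")
      case True then show ?thesis using b by (simp add: lie_cong.br_alt)
    next
      case False
      have "\<forall>A\<in>AA. \<not> {x, y} \<subseteq> A"
      proof (intro ballI notI)
        fix A assume A: "A \<in> AA" "{x, y} \<subseteq> A"
        then have "A \<notin> BB i" using b by blast
        then have "x = y" using out_B_card[OF i A(1)] A b by blast
        then show False using False by blast
      qed
      then have "r \<in> RR" using R_rel_comm S_sub[OF i] b by blast
      then show ?thesis by (rule lie_cong.rel)
    qed
  qed
qed

lemma RB_to_R: assumes "i < k" "lie_cong (RB i) a b" shows "lie_cong RR a b"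
  by (rule lc_mono[OF _ assms(2)]) (use RB_rels[OF assms(1)] in blast)

lemma kill_rel: "i < k \<Longrightarrow> r \<in> RR \<Longrightarrow> lie_cong (RB i) (killout (SS i) r) LZero"
proof -
  assume i: "i < k" and r: "r \<in> RR"
  then consider (a) A where "A \<in> AA" "r \<in> RA A"
    | (b) x y where "r = LBr (LV x) (LV y)" "x \<in> E" "y \<in> E" "\<forall>A\<in>AA. \<not> {x, y} \<subseteq> A"
    unfolding pres_rels_def by blast
  then show ?thesis
  proof cases
    case a
    show ?thesis
    proof (cases "A \<in> BB i")
      case True
      then have "lvars r \<subseteq> SS i" using RA_vars[OF a] in_S by blast
      then have "killout (SS i) r = r" by (rule killout_id)
      moreover have "r \<in> RB i" using True a unfolding pres_rels_def by blast
      ultimately show ?thesis by (simp add: lie_cong.rel)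
    next
      case False
      obtain b where b: "b \<in> brspan A" "lie_cong {} r b" using RA_vars[OF a] by blast
      have "lie_cong (RB i) (killout (SS i) r) (killout (SS i) b)"
        by (rule killout_cong[OF _ b(2)]) simp
      moreover have "lie_cong (RB i) (killout (SS i) b) LZero"
      proof (rule commuting_brspan)
        show "killout (SS i) b \<in> brspan (A \<inter> SS i)" using b(1) by (rule killout_brspan)
        show "\<forall>a\<in>A \<inter> SS i. \<forall>b\<in>A \<inter> SS i. a \<noteq> b \<longrightarrow> lie_cong (RB i) (LBr (LV a) (LV b)) LZero"
          using out_B_card[OF i a(1) False] by blast
      qed
      ultimately show ?thesis by (rule lc_trans)
    qed
  next
    case b
    show ?thesis
    proof (cases "x \<in> SS i \<and> y \<in> SS i")
      case True
      have "r \<in> RB i" using True b B_sub[OF i] unfolding pres_rels_def by blast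
      then show ?thesis using True b by (simp add: lie_cong.rel)
    next
      case False
      then show ?thesis using b by (auto simp: lc_br_zero_l lc_br_zero_r)
    qed
  qed
qed

lemma kill_cong: assumes "i < k" "lie_cong RR a b" shows "lie_cong (RB i) (killout (SS i) a) (killout (SS i) b)"
  by (rule killout_cong[OF _ assms(2)]) (use kill_rel[OF assms(1)] in blast)

definition Ni :: "nat \<Rightarrow> ('k, 'x) lterm set" where
  "Ni i = cl RR {t. lvars t \<subseteq> E - SS i}"

lemma csd_Ni: "csd RR (Ni i)" unfolding Ni_def by (rule csd_cl[OF subsp_over])

lemma Ni_over: "lvars t \<subseteq> E - SS i \<Longrightarrow> t \<in> Ni i"
  unfolding Ni_def by (rule cl_cong_mem[OF lie_cong.refl]) simp

lemma Ni_obtain: "t \<in> Ni i \<Longrightarrow> \<exists>s. lvars s \<subseteq> E - SS i \<and> lie_cong RR t s"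
  unfolding Ni_def cl_def by simp

lemma Ni_br_over:
  assumes "t \<in> Ni i" "lvars b \<subseteq> E - SS i"
  shows "LBr t b \<in> Ni i" "LBr b t \<in> Ni i"
proof -
  obtain s where s: "lvars s \<subseteq> E - SS i" "lie_cong RR t s" using Ni_obtain[OF assms(1)] by blast
  have "lie_cong RR (LBr t b) (LBr s b)" by (rule lie_cong.cong_br[OF s(2) lie_cong.refl])
  moreover have "LBr s b \<in> Ni i" using s assms by (intro Ni_over) auto
  ultimately show "LBr t b \<in> Ni i" by (rule csd_cong[OF csd_Ni])
  have "lie_cong RR (LBr b t) (LBr b s)" by (rule lie_cong.cong_br[OF lie_cong.refl s(2)])
  moreover have "LBr b s \<in> Ni i" using s assms by (intro Ni_over) auto
  ultimately show "LBr b t \<in> Ni i" by (rule csd_cong[OF csd_Ni])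
qed

lemma gen_br:
  assumes i: "i < k" and x: "x \<in> E" "x \<notin> SS i" and y: "y \<in> SS i"
  shows "LBr (LV x) (LV y) \<in> Ni i"
proof (cases "\<exists>A\<in>AA. {x, y} \<subseteq> A")
  case True
  then obtain A where A: "A \<in> AA" "{x, y} \<subseteq> A" by auto
  have xA: "x \<in> A" and yA: "y \<in> A" using A(2) by auto
  have AnB: "A \<notin> BB i"
  proof
    assume "A \<in> BB i"
    then have "A \<subseteq> SS i" by (rule in_S)
    then have "x \<in> SS i" using xA by (rule subsetD)
    then show False using x(2) by simp
  qed
  obtain B where B: "B \<in> BB i" "y \<in> B" using y unfolding supp_def by auto
  have BAA: "B \<in> AA" using B_sub[OF i] B(1) by (rule subsetD)
  have BA: "B \<noteq> A" using B(1) AnB by auto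
  have ex: "\<exists>B\<in>AA. B \<noteq> A \<and> y \<in> B" using BAA BA B(2) by auto
  have repl': "\<forall>A\<in>AA. \<forall>x\<in>A. (\<exists>B\<in>AA. B \<noteq> A \<and> x \<in> B) \<longrightarrow>
      derived (RA A) A \<subseteq> subalg_gen (RA A) A (A - {x})"
    using repl unfolding replacement_def .
  have sub: "derived (RA A) A \<subseteq> subalg_gen (RA A) A (A - {y})"
    by (rule repl'[rule_format, OF A(1) yA ex])
  have mem: "LBr (LV x) (LV y) \<in> brspan A" by (rule brspan.intros(1)) (use xA yA in auto)
  have "LBr (LV x) (LV y) \<in> derived (RA A) A"
    unfolding derived_def
  proof (rule CollectI, rule conjI)
    show "lvars (LBr (LV x) (LV y)) \<subseteq> A" using xA yA by simp
    show "\<exists>s\<in>brspan A. lie_cong (RA A) (LBr (LV x) (LV y)) s"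
      by (rule bexI[OF lie_cong.refl mem])
  qed
  then have "LBr (LV x) (LV y) \<in> subalg_gen (RA A) A (A - {y})" using sub by (rule rev_subsetD)
  then obtain s where s: "lvars s \<subseteq> A - {y}" "lie_cong (RA A) (LBr (LV x) (LV y)) s"
    unfolding subalg_gen_def by auto
  have rr: "\<forall>r\<in>RA A. lie_cong RR r LZero"
  proof
    fix r assume "r \<in> RA A"
    then show "lie_cong RR r LZero" by (rule lie_cong.rel[OF R_rel_RA[OF A(1)]])
  qed
  have c: "lie_cong RR (LBr (LV x) (LV y)) s" by (rule lc_mono[OF rr s(2)])
  have sv: "lvars s \<subseteq> E - SS i"
  proof
    fix a assume a: "a \<in> lvars s"
    then have aA: "a \<in> A" and ay: "a \<noteq> y" using s(1) by auto
    have aE: "a \<in> E" using A_sub[OF A(1)] aA by (rule subsetD)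
    have "a \<notin> SS i"
    proof
      assume aS: "a \<in> SS i"
      have "a = y" by (rule out_B_card[OF i A(1) AnB aA yA aS y])
      then show False using ay by simp
    qed
    then show "a \<in> E - SS i" using aE by simp
  qed
  have "s \<in> {t. lvars t \<subseteq> E - SS i}" using sv by simp
  then show ?thesis unfolding Ni_def by (rule cl_cong_mem[OF c])
next
  case False
  have yE: "y \<in> E" using S_sub[OF i] y by (rule subsetD)
  have "\<forall>A\<in>AA. \<not> {x, y} \<subseteq> A" using False by auto
  then have "LBr (LV x) (LV y) \<in> RR" by (rule R_rel_comm[OF x(1) yE])
  then show ?thesis by (rule csd_zero_cong[OF csd_Ni lie_cong.rel])
qed

lemma Ni_br_gen:
  assumes i: "i < k" and y: "y \<in> SS i" and s: "lvars s \<subseteq> E - SS i"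
  shows "LBr (LV y) s \<in> Ni i"
proof -
  have "s \<in> {m. \<forall>X\<in>{LV y}. LBr X m \<in> Ni i}"
  proof (rule term_induct_csd[OF csd_br_right[OF csd_Ni] _ _ s])
    fix x assume x: "x \<in> E - SS i"
    have "LBr (LV x) (LV y) \<in> Ni i" by (rule gen_br[OF i _ _ y]) (use x in auto)
    then have "LSmul (-1) (LBr (LV x) (LV y)) \<in> Ni i" by (rule csd_smul[OF csd_Ni])
    then show "LV x \<in> {m. \<forall>X\<in>{LV y}. LBr X m \<in> Ni i}"
      using csd_cong[OF csd_Ni lc_antisym] by simp
  next
    fix a b assume ab: "lvars a \<subseteq> E - SS i" "lvars b \<subseteq> E - SS i"
      and ha: "a \<in> {m. \<forall>X\<in>{LV y}. LBr X m \<in> Ni i}" and hb: "b \<in> {m. \<forall>X\<in>{LV y}. LBr X m \<in> Ni i}"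
    have "LBr (LBr (LV y) a) b \<in> Ni i" using Ni_br_over(1) ha ab by simp
    moreover have "LBr a (LBr (LV y) b) \<in> Ni i" using Ni_br_over(2) hb ab by simp
    ultimately have "LAdd (LBr (LBr (LV y) a) b) (LBr a (LBr (LV y) b)) \<in> Ni i"
      by (rule csd_add[OF csd_Ni])
    then show "LBr a b \<in> {m. \<forall>X\<in>{LV y}. LBr X m \<in> Ni i}"
      using csd_cong[OF csd_Ni lc_jacobi2] by simp
  qed
  then show ?thesis by simp
qed

lemma Ni_ideal:
  assumes i: "i < k" and u: "lvars u \<subseteq> E" and t: "t \<in> Ni i"
  shows "LBr u t \<in> Ni i"
proof -
  have "u \<in> {m. \<forall>X\<in>Ni i. LBr m X \<in> Ni i}"
  proof (rule term_induct_csd[OF csd_br_left[OF csd_Ni] _ _ u])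
    fix y assume y: "y \<in> E"
    show "LV y \<in> {m. \<forall>X\<in>Ni i. LBr m X \<in> Ni i}"
    proof (simp, intro ballI)
      fix X assume "X \<in> Ni i"
      then obtain s where s: "lvars s \<subseteq> E - SS i" "lie_cong RR X s" using Ni_obtain by blast
      have m: "LBr (LV y) s \<in> Ni i"
      proof (cases "y \<in> SS i")
        case True show ?thesis using Ni_br_gen[OF i True s(1)] .
      next
        case False then show ?thesis using s(1) y by (intro Ni_over) auto
      qed
      have "lie_cong RR (LBr (LV y) X) (LBr (LV y) s)"
        by (rule lie_cong.cong_br[OF lie_cong.refl s(2)])
      then show "LBr (LV y) X \<in> Ni i" using m by (rule csd_cong[OF csd_Ni])
    qed
  next
    fix a b assume ha: "a \<in> {m. \<forall>X\<in>Ni i. LBr m X \<in> Ni i}" and hb: "b \<in> {m. \<forall>X\<in>Ni i. LBr m X \<in> Ni i}"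
    show "LBr a b \<in> {m. \<forall>X\<in>Ni i. LBr m X \<in> Ni i}"
    proof (simp, intro ballI)
      fix X assume X: "X \<in> Ni i"
      have "LBr a (LBr b X) \<in> Ni i" using ha hb X by simp
      moreover have "LBr b (LBr a X) \<in> Ni i" using ha hb X by simp
      ultimately have "LAdd (LBr a (LBr b X)) (LSmul (-1) (LBr b (LBr a X))) \<in> Ni i"
        by (rule csd_addneg[OF csd_Ni])
      then show "LBr (LBr a b) X \<in> Ni i" by (rule csd_cong[OF csd_Ni lc_br_left_expand])
    qed
  qed
  then show ?thesis using t by simp
qed

lemma Ni_ideal_r:
  assumes i: "i < k" and u: "lvars u \<subseteq> E" and t: "t \<in> Ni i"
  shows "LBr t u \<in> Ni i"
proof -
  have "LSmul (-1) (LBr u t) \<in> Ni i" using Ni_ideal[OF assms] by (rule csd_smul[OF csd_Ni])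
  then show ?thesis by (rule csd_cong[OF csd_Ni lc_antisym])
qed

lemma decomp:
  assumes i: "i < k"
  shows "lvars t \<subseteq> E \<Longrightarrow> \<exists>n\<in>Ni i. lie_cong RR t (LAdd (killout (SS i) t) n)"
proof (induction t)
  case (LV x)
  show ?case
  proof (cases "x \<in> SS i")
    case True
    show ?thesis
    proof (rule bexI[of _ LZero])
      show "lie_cong RR (LV x) (LAdd (killout (SS i) (LV x)) LZero)"
        using True lc_sym[OF lie_cong.add_zero] by simp
    qed (rule csd_zero[OF csd_Ni])
  next
    case False
    then have "LV x \<in> Ni i" using LV by (intro Ni_over) auto
    show ?thesis
    proof (rule bexI[of _ "LV x"])
      show "lie_cong RR (LV x) (LAdd (killout (SS i) (LV x)) (LV x))"
        using False lc_sym[OF lc_add_zero_l] by simp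
    qed fact
  qed
next
  case LZero
  show ?case
  proof (rule bexI[of _ LZero])
    show "lie_cong RR LZero (LAdd (killout (SS i) LZero) LZero)"
      using lc_sym[OF lie_cong.add_zero] by simp
  qed (rule csd_zero[OF csd_Ni])
next
  case (LAdd t1 t2)
  then obtain n1 n2 where n: "n1 \<in> Ni i" "n2 \<in> Ni i"
    "lie_cong RR t1 (LAdd (killout (SS i) t1) n1)" "lie_cong RR t2 (LAdd (killout (SS i) t2) n2)"
    by auto
  have "lie_cong RR (LAdd t1 t2) (LAdd (LAdd (killout (SS i) t1) n1) (LAdd (killout (SS i) t2) n2))"
    by (rule lie_cong.cong_add[OF n(3,4)])
  also have "lie_cong RR \<dots> (LAdd (LAdd (killout (SS i) t1) (killout (SS i) t2)) (LAdd n1 n2))"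
    by (rule lc_add_swap)
  finally have c: "lie_cong RR (LAdd t1 t2) (LAdd (LAdd (killout (SS i) t1) (killout (SS i) t2)) (LAdd n1 n2))" .
  show ?case by (rule bexI[of _ "LAdd n1 n2"]) (simp add: c, rule csd_add[OF csd_Ni n(1,2)])
next
  case (LSmul c t)
  then obtain n where n: "n \<in> Ni i" "lie_cong RR t (LAdd (killout (SS i) t) n)" by auto
  have "lie_cong RR (LSmul c t) (LSmul c (LAdd (killout (SS i) t) n))"
    by (rule lie_cong.cong_smul[OF n(2)])
  also have "lie_cong RR \<dots> (LAdd (LSmul c (killout (SS i) t)) (LSmul c n))"
    by (rule lie_cong.smul_add)
  finally have cc: "lie_cong RR (LSmul c t) (LAdd (LSmul c (killout (SS i) t)) (LSmul c n))" .
  show ?case by (rule bexI[of _ "LSmul c n"]) (simp add: cc, rule csd_smul[OF csd_Ni n(1)])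
next
  case (LBr t1 t2)
  then have v: "lvars t1 \<subseteq> E" "lvars t2 \<subseteq> E" by auto
  from LBr obtain n1 n2 where n: "n1 \<in> Ni i" "n2 \<in> Ni i"
    "lie_cong RR t1 (LAdd (killout (SS i) t1) n1)" "lie_cong RR t2 (LAdd (killout (SS i) t2) n2)"
    by auto
  define k1 where "k1 = killout (SS i) t1"
  define k2 where "k2 = killout (SS i) t2"
  have k1v: "lvars k1 \<subseteq> E" using lvars_killout[of "SS i" t1] v unfolding k1_def by auto
  have "lie_cong RR (LBr t1 t2) (LBr (LAdd k1 n1) t2)"
    unfolding k1_def by (rule lie_cong.cong_br[OF n(3) lie_cong.refl])
  also have "lie_cong RR \<dots> (LAdd (LBr k1 t2) (LBr n1 t2))" by (rule lie_cong.br_add_left)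
  also have "lie_cong RR \<dots> (LAdd (LBr k1 (LAdd k2 n2)) (LBr n1 t2))"
    unfolding k2_def by (rule lie_cong.cong_add[OF lie_cong.cong_br[OF lie_cong.refl n(4)] lie_cong.refl])
  also have "lie_cong RR \<dots> (LAdd (LAdd (LBr k1 k2) (LBr k1 n2)) (LBr n1 t2))"
    by (rule lie_cong.cong_add[OF lie_cong.br_add_right lie_cong.refl])
  also have "lie_cong RR \<dots> (LAdd (LBr k1 k2) (LAdd (LBr k1 n2) (LBr n1 t2)))"
    by (rule lie_cong.add_assoc)
  finally have c3: "lie_cong RR (LBr t1 t2) (LAdd (LBr k1 k2) (LAdd (LBr k1 n2) (LBr n1 t2)))" .
  have nn: "LAdd (LBr k1 n2) (LBr n1 t2) \<in> Ni i"
    using Ni_ideal[OF i k1v n(2)] Ni_ideal_r[OF i v(2) n(1)] by (rule csd_add[OF csd_Ni])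
  show ?case
    by (rule bexI[of _ "LAdd (LBr k1 n2) (LBr n1 t2)"]) (use c3 in \<open>simp add: k1_def k2_def\<close>, rule nn)
qed

lemma part3: "i < k \<Longrightarrow> proj_kernel E RA (BB i) = subalg_gen RR E (E - SS i)"
proof
  assume i: "i < k"
  show "proj_kernel E RA (BB i) \<subseteq> subalg_gen RR E (E - SS i)"
  proof
    fix t assume "t \<in> proj_kernel E RA (BB i)"
    then have t: "lvars t \<subseteq> E" "lie_cong (RB i) (killout (SS i) t) LZero"
      unfolding proj_kernel_def by auto
    have kz: "lie_cong RR (killout (SS i) t) LZero" using RB_to_R[OF i t(2)] .
    obtain n where n: "n \<in> Ni i" "lie_cong RR t (LAdd (killout (SS i) t) n)" using decomp[OF i t(1)] by blast
    obtain s where s: "lvars s \<subseteq> E - SS i" "lie_cong RR n s" using Ni_obtain[OF n(1)] by blast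
    have "lie_cong RR t (LAdd LZero n)"
      by (rule lc_trans[OF n(2) lie_cong.cong_add[OF kz lie_cong.refl]])
    also have "lie_cong RR \<dots> n" by (rule lc_add_zero_l)
    also have "lie_cong RR \<dots> s" by (rule s(2))
    finally show "t \<in> subalg_gen RR E (E - SS i)" unfolding subalg_gen_def using t(1) s(1) by auto
  qed
next
  assume i: "i < k"
  show "subalg_gen RR E (E - SS i) \<subseteq> proj_kernel E RA (BB i)"
  proof
    fix t assume "t \<in> subalg_gen RR E (E - SS i)"
    then obtain s where t: "lvars t \<subseteq> E" "lvars s \<subseteq> E - SS i" "lie_cong RR t s"
      unfolding subalg_gen_def by auto
    have "lie_cong (RB i) (killout (SS i) t) (killout (SS i) s)" by (rule kill_cong[OF i t(3)])
    also have "lie_cong (RB i) \<dots> LZero" by (rule killout_disj_zero) (use t(2) in auto)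
    finally show "t \<in> proj_kernel E RA (BB i)" unfolding proj_kernel_def using t(1) by auto
  qed
qed

end


lemma lc_br_zr: "lie_cong R b LZero \<Longrightarrow> lie_cong R (LBr a b) LZero"
  by (rule lc_trans[OF lie_cong.cong_br[OF lie_cong.refl] lc_br_zero_r])

lemma lc_br_zl: "lie_cong R a LZero \<Longrightarrow> lie_cong R (LBr a b) LZero"
  by (rule lc_trans[OF lie_cong.cong_br[OF _ lie_cong.refl] lc_br_zero_l])

context arr_setup
begin

definition GG :: "('k, 'x) lterm set" where
  "GG = {LBr (LV x) (LBr (LV y) (LV z)) | x y z i.
              i < k \<and> y \<in> supp (BB i) \<and> z \<in> supp (BB i) \<and> x \<in> E - supp (BB i)}"

definition NN :: "('k, 'x) lterm set" where "NN = cl RR (idspan E GG)"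

lemma csd_NN: "csd RR NN" unfolding NN_def by (rule csd_cl[OF subsp_idspan])

lemma GG_vars: "g \<in> GG \<Longrightarrow> lvars g \<subseteq> E"
  unfolding GG_def using S_sub by fastforce

lemma idspan_vars: "t \<in> idspan E GG \<Longrightarrow> lvars t \<subseteq> E"
  by (induction rule: idspan.induct) (auto dest: GG_vars)

lemma idspan_brspan: "t \<in> idspan E GG \<Longrightarrow> t \<in> brspan E"
proof (induction rule: idspan.induct)
  case (1 g)
  then obtain x y z i where g: "g = LBr (LV x) (LBr (LV y) (LV z))" unfolding GG_def by auto
  show ?case unfolding g by (rule brspan.intros(1)) (use GG_vars[OF 1] g in auto)
next
  case 2 show ?case by (rule brspan.intros(2))
next
  case (3 s t) then show ?case by (simp add: brspan.intros(3))
next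
  case (4 t a) then show ?case by (simp add: brspan.intros(4))
next
  case (5 u s) then show ?case using idspan_vars by (auto intro: brspan.intros(1))
next
  case (6 u s) then show ?case using idspan_vars by (auto intro: brspan.intros(1))
qed

lemma kill_gen:
  assumes j: "j < k" and g: "g \<in> GG"
  shows "lie_cong (RB j) (killout (SS j) g) LZero"
proof -
  obtain x y z i where g': "g = LBr (LV x) (LBr (LV y) (LV z))" and i: "i < k"
    and yz: "y \<in> SS i" "z \<in> SS i" and x: "x \<in> E" "x \<notin> SS i"
    using g unfolding GG_def by auto
  show ?thesis
  proof (cases "x \<in> SS j")
    case False
    then show ?thesis unfolding g' by (simp add: lc_br_zl lie_cong.refl)
  next
    case xj: True
    have ij: "i \<noteq> j" using xj x by auto
    have inner: "lie_cong (RB j) (killout (SS j) (LBr (LV y) (LV z))) LZero"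
    proof (cases "y \<in> SS j \<and> z \<in> SS j")
      case False then show ?thesis by (auto simp: lc_br_zero_l lc_br_zero_r)
    next
      case True
      show ?thesis
      proof (cases "y = z")
        case True then show ?thesis by (simp add: lie_cong.br_alt)
      next
        case yz_ne: False
        have "\<forall>D\<in>BB j. \<not> {y, z} \<subseteq> D"
        proof (intro ballI notI)
          fix D assume D: "D \<in> BB j" "{y, z} \<subseteq> D"
          have DA: "D \<in> AA" using B_sub[OF j] D(1) by (rule subsetD)
          have "D \<notin> BB i" using disj i j ij D(1) by auto
          then have "y = z" using out_B_card[OF i DA] D(2) yz by auto
          then show False using yz_ne by simp
        qed
        then have "LBr (LV y) (LV z) \<in> RB j" using True unfolding pres_rels_def by auto
        then show ?thesis using True by (simp add: lie_cong.rel)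
      qed
    qed
    show ?thesis unfolding g' using inner by (simp add: lc_br_zr)
  qed
qed

lemma kill_idspan: assumes j: "j < k" shows "t \<in> idspan E GG \<Longrightarrow> lie_cong (RB j) (killout (SS j) t) LZero"
proof (induction rule: idspan.induct)
  case (1 g) then show ?case by (rule kill_gen[OF j])
next
  case 2 show ?case by (simp add: lie_cong.refl)
next
  case (3 s t) then show ?case by (simp add: lc_zero_add)
next
  case (4 t a) then show ?case by (simp add: lc_zero_smul)
next
  case (5 u s) then show ?case by (simp add: lc_br_zr)
next
  case (6 u s) then show ?case by (simp add: lc_br_zl)
qed

lemma ideal_sub_J:
  assumes t: "t \<in> ideal_gen RR E GG"
  shows "t \<in> derived RR E" "\<forall>j<k. t \<in> proj_kernel E RA (BB j)"
proof -
  obtain s where s: "lvars t \<subseteq> E" "s \<in> idspan E GG" "lie_cong RR t s"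
    using t unfolding ideal_gen_def by auto
  have "s \<in> brspan E" using s(2) by (rule idspan_brspan)
  then show "t \<in> derived RR E" unfolding derived_def using s by auto
  show "\<forall>j<k. t \<in> proj_kernel E RA (BB j)"
  proof (intro allI impI)
    fix j assume j: "j < k"
    have "lie_cong (RB j) (killout (SS j) t) (killout (SS j) s)" by (rule kill_cong[OF j s(3)])
    also have "lie_cong (RB j) \<dots> LZero" by (rule kill_idspan[OF j s(2)])
    finally show "t \<in> proj_kernel E RA (BB j)" unfolding proj_kernel_def using s(1) by auto
  qed
qed

lemma NN_br:
  assumes u: "lvars u \<subseteq> E" and t: "t \<in> NN"
  shows "LBr u t \<in> NN" "LBr t u \<in> NN"
proof -
  obtain n where n: "n \<in> idspan E GG" "lie_cong RR t n" using t unfolding NN_def cl_def by auto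
  have "LBr u n \<in> idspan E GG" by (rule idspan.intros(5)[OF u n(1)])
  then have "LBr u n \<in> NN" unfolding NN_def using cl_incl by auto
  then show "LBr u t \<in> NN" by (rule csd_cong[OF csd_NN lie_cong.cong_br[OF lie_cong.refl n(2)]])
  have "LBr n u \<in> idspan E GG" by (rule idspan.intros(6)[OF u n(1)])
  then have "LBr n u \<in> NN" unfolding NN_def using cl_incl by auto
  then show "LBr t u \<in> NN" by (rule csd_cong[OF csd_NN lie_cong.cong_br[OF n(2) lie_cong.refl]])
qed

lemma GG_NN: "g \<in> GG \<Longrightarrow> g \<in> NN"
  unfolding NN_def by (rule subsetD[OF cl_incl idspan.intros(1)])

definition PP :: "nat \<Rightarrow> ('k, 'x) lterm set" where
  "PP i = {m. \<forall>X\<in>{X. lvars X \<subseteq> E - SS i}. LBr X m \<in> NN}"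

lemma csd_PP: "csd RR (PP i)" unfolding PP_def by (rule csd_br_right[OF csd_NN])

lemma Pm_base:
  assumes i: "i < k" and y: "y \<in> SS i" and z: "z \<in> SS i"
  shows "LBr (LV y) (LV z) \<in> PP i"
proof -
  have "\<And>X. lvars X \<subseteq> E - SS i \<Longrightarrow> X \<in> {m. \<forall>t\<in>{LBr (LV y) (LV z)}. LBr m t \<in> NN}"
  proof (rule term_induct_csd[OF csd_br_left[OF csd_NN]])
    fix x assume x: "x \<in> E - SS i"
    have "LBr (LV x) (LBr (LV y) (LV z)) \<in> GG" unfolding GG_def using i y z x by blast
    then show "LV x \<in> {m. \<forall>t\<in>{LBr (LV y) (LV z)}. LBr m t \<in> NN}" using GG_NN by simp
  next
    fix a b assume ab: "lvars a \<subseteq> E - SS i" "lvars b \<subseteq> E - SS i"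
      and ha: "a \<in> {m. \<forall>t\<in>{LBr (LV y) (LV z)}. LBr m t \<in> NN}"
      and hb: "b \<in> {m. \<forall>t\<in>{LBr (LV y) (LV z)}. LBr m t \<in> NN}"
    have "LBr a (LBr b (LBr (LV y) (LV z))) \<in> NN" using NN_br(1)[of a] ab hb by auto
    moreover have "LBr b (LBr a (LBr (LV y) (LV z))) \<in> NN" using NN_br(1)[of b] ab ha by auto
    ultimately have "LAdd (LBr a (LBr b (LBr (LV y) (LV z)))) (LSmul (-1) (LBr b (LBr a (LBr (LV y) (LV z))))) \<in> NN"
      by (rule csd_addneg[OF csd_NN])
    then have "LBr (LBr a b) (LBr (LV y) (LV z)) \<in> NN" by (rule csd_cong[OF csd_NN lc_br_left_expand])
    then show "LBr a b \<in> {m. \<forall>t\<in>{LBr (LV y) (LV z)}. LBr m t \<in> NN}" by simp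
  qed
  then show ?thesis unfolding PP_def by simp
qed

lemma Pm_step:
  assumes i: "i < k" and c: "lvars c \<subseteq> SS i" and m: "m \<in> PP i"
  shows "LBr c m \<in> PP i"
  unfolding PP_def
proof (simp, intro allI impI)
  fix X :: "('k, 'x) lterm" assume X: "lvars X \<subseteq> E - SS i"
  have cE: "lvars c \<subseteq> E" using c S_sub[OF i] by auto
  have Xm: "LBr X m \<in> NN" using m X unfolding PP_def by simp
  have t2: "LBr c (LBr X m) \<in> NN" by (rule NN_br(1)[OF cE Xm])
  have "LBr X c \<in> Ni i" by (rule Ni_ideal_r[OF i cE Ni_over[OF X]])
  then obtain X2 where X2: "lvars X2 \<subseteq> E - SS i" "lie_cong RR (LBr X c) X2" using Ni_obtain by blast
  have "LBr X2 m \<in> NN" using m X2(1) unfolding PP_def by simp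
  then have t1: "LBr (LBr X c) m \<in> NN" by (rule csd_cong[OF csd_NN lie_cong.cong_br[OF X2(2) lie_cong.refl]])
  have "LAdd (LBr (LBr X c) m) (LBr c (LBr X m)) \<in> NN" by (rule csd_add[OF csd_NN t1 t2])
  then show "LBr X (LBr c m) \<in> NN" by (rule csd_cong[OF csd_NN lc_jacobi2])
qed

lemma Pm_all:
  assumes i: "i < k" and a: "lvars a \<subseteq> SS i"
  shows "\<forall>b\<in>{b. lvars b \<subseteq> SS i}. LBr a b \<in> PP i"
proof -
  have "a \<in> {a. \<forall>b\<in>{b. lvars b \<subseteq> SS i}. LBr a b \<in> PP i}"
  proof (rule term_induct_csd[OF csd_br_left[OF csd_PP] _ _ a])
    fix y assume y: "y \<in> SS i"
    have "\<And>b. lvars b \<subseteq> SS i \<Longrightarrow> b \<in> {m. \<forall>t\<in>{LV y}. LBr t m \<in> PP i}"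
    proof (rule term_induct_csd[OF csd_br_right[OF csd_PP]])
      fix z assume z: "z \<in> SS i"
      show "LV z \<in> {m. \<forall>t\<in>{LV y}. LBr t m \<in> PP i}" using Pm_base[OF i y z] by simp
    next
      fix b1 b2 assume b: "lvars b1 \<subseteq> SS i" "lvars b2 \<subseteq> SS i"
        and h1: "b1 \<in> {m. \<forall>t\<in>{LV y}. LBr t m \<in> PP i}" and h2: "b2 \<in> {m. \<forall>t\<in>{LV y}. LBr t m \<in> PP i}"
      have p1: "LBr (LV y) b1 \<in> PP i" using h1 by simp
      have p2: "LBr (LV y) b2 \<in> PP i" using h2 by simp
      have "LBr b2 (LBr (LV y) b1) \<in> PP i" by (rule Pm_step[OF i b(2) p1])
      then have "LSmul (-1) (LBr b2 (LBr (LV y) b1)) \<in> PP i" by (rule csd_smul[OF csd_PP])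
      then have q1: "LBr (LBr (LV y) b1) b2 \<in> PP i" by (rule csd_cong[OF csd_PP lc_antisym])
      have q2: "LBr b1 (LBr (LV y) b2) \<in> PP i" by (rule Pm_step[OF i b(1) p2])
      have "LAdd (LBr (LBr (LV y) b1) b2) (LBr b1 (LBr (LV y) b2)) \<in> PP i" by (rule csd_add[OF csd_PP q1 q2])
      then have "LBr (LV y) (LBr b1 b2) \<in> PP i" by (rule csd_cong[OF csd_PP lc_jacobi2])
      then show "LBr b1 b2 \<in> {m. \<forall>t\<in>{LV y}. LBr t m \<in> PP i}" by simp
    qed
    then show "LV y \<in> {a. \<forall>b\<in>{b. lvars b \<subseteq> SS i}. LBr a b \<in> PP i}" by simp
  next
    fix a1 a2 assume a: "lvars a1 \<subseteq> SS i" "lvars a2 \<subseteq> SS i"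
      and h1: "a1 \<in> {a. \<forall>b\<in>{b. lvars b \<subseteq> SS i}. LBr a b \<in> PP i}"
      and h2: "a2 \<in> {a. \<forall>b\<in>{b. lvars b \<subseteq> SS i}. LBr a b \<in> PP i}"
    show "LBr a1 a2 \<in> {a. \<forall>b\<in>{b. lvars b \<subseteq> SS i}. LBr a b \<in> PP i}"
    proof (simp, intro allI impI)
      fix b :: "('k, 'x) lterm" assume b: "lvars b \<subseteq> SS i"
      have p1: "LBr a1 b \<in> PP i" using h1 b by simp
      have p2: "LBr a2 b \<in> PP i" using h2 b by simp
      have q1: "LBr a1 (LBr a2 b) \<in> PP i" by (rule Pm_step[OF i a(1) p2])
      have q2: "LBr a2 (LBr a1 b) \<in> PP i" by (rule Pm_step[OF i a(2) p1])
      have "LAdd (LBr a1 (LBr a2 b)) (LSmul (-1) (LBr a2 (LBr a1 b))) \<in> PP i"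
        by (rule csd_addneg[OF csd_PP q1 q2])
      then show "LBr (LBr a1 a2) b \<in> PP i" by (rule csd_cong[OF csd_PP lc_br_left_expand])
    qed
  qed
  then show ?thesis by simp
qed

lemma Pm_brspan: "i < k \<Longrightarrow> p \<in> brspan (SS i) \<Longrightarrow> p \<in> PP i"
  by (rule brspan_induct_csd[OF csd_PP]) (use Pm_all in auto)

inductive_set QS :: "('k, 'x) lterm set" where
  q_br: "i < k \<Longrightarrow> p \<in> brspan (SS i) \<Longrightarrow> p \<in> QS"
| q_id: "n \<in> idspan E GG \<Longrightarrow> n \<in> QS"
| q_zero: "LZero \<in> QS"
| q_add: "a \<in> QS \<Longrightarrow> b \<in> QS \<Longrightarrow> LAdd a b \<in> QS"
| q_smul: "a \<in> QS \<Longrightarrow> LSmul c a \<in> QS"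

lemma subsp_QS: "subsp QS" unfolding subsp_def by (auto intro: QS.intros)

definition QQ :: "('k, 'x) lterm set" where "QQ = cl RR QS"

lemma csd_QQ: "csd RR QQ" unfolding QQ_def by (rule csd_cl[OF subsp_QS])

lemma QS_QQ: "q \<in> QS \<Longrightarrow> q \<in> QQ" unfolding QQ_def using cl_incl by auto

lemma NN_QQ: "t \<in> NN \<Longrightarrow> t \<in> QQ"
proof -
  have "idspan E GG \<subseteq> QS" using q_id by auto
  then have "cl RR (idspan E GG) \<subseteq> cl RR QS" by (rule cl_mono)
  then show "t \<in> NN \<Longrightarrow> t \<in> QQ" unfolding NN_def QQ_def by auto
qed

lemma L1:
  assumes x: "x \<in> E" and q: "q \<in> QS"
  shows "LBr (LV x) q \<in> QQ"
  using q
proof (induction rule: QS.induct)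
  case (q_br i p)
  show ?case
  proof (cases "x \<in> SS i")
    case True
    have "LBr (LV x) p \<in> brspan (SS i)"
      by (rule brspan.intros(1)) (use True lvars_brspan[OF q_br(2)] in auto)
    then show ?thesis by (intro QS_QQ QS.q_br[OF q_br(1)])
  next
    case False
    have "p \<in> PP i" by (rule Pm_brspan[OF q_br(1,2)])
    then have "LBr (LV x) p \<in> NN" using x False unfolding PP_def by simp
    then show ?thesis by (rule NN_QQ)
  qed
next
  case (q_id n)
  have "LBr (LV x) n \<in> idspan E GG" by (rule idspan.intros(5)) (use x q_id in auto)
  then show ?case by (intro QS_QQ QS.q_id)
next
  case q_zero show ?case by (rule csd_zero_cong[OF csd_QQ lc_br_zero_r])
next
  case (q_add a b)
  then show ?case by (intro csd_cong[OF csd_QQ lie_cong.br_add_right] csd_add[OF csd_QQ])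
next
  case (q_smul a c)
  then show ?case by (intro csd_cong[OF csd_QQ lie_cong.br_smul_right] csd_smul[OF csd_QQ])
qed

lemma L2:
  assumes s: "lvars s \<subseteq> E" and t: "t \<in> QQ"
  shows "LBr s t \<in> QQ"
proof -
  have "s \<in> {s. \<forall>t\<in>QQ. LBr s t \<in> QQ}"
  proof (rule term_induct_csd[OF csd_br_left[OF csd_QQ] _ _ s])
    fix x assume x: "x \<in> E"
    show "LV x \<in> {s. \<forall>t\<in>QQ. LBr s t \<in> QQ}"
    proof (simp, intro ballI)
      fix t assume "t \<in> QQ"
      then obtain q where q: "q \<in> QS" "lie_cong RR t q" unfolding QQ_def cl_def by auto
      have "LBr (LV x) q \<in> QQ" by (rule L1[OF x q(1)])
      then show "LBr (LV x) t \<in> QQ" by (rule csd_cong[OF csd_QQ lie_cong.cong_br[OF lie_cong.refl q(2)]])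
    qed
  next
    fix a b assume ha: "a \<in> {s. \<forall>t\<in>QQ. LBr s t \<in> QQ}" and hb: "b \<in> {s. \<forall>t\<in>QQ. LBr s t \<in> QQ}"
    show "LBr a b \<in> {s. \<forall>t\<in>QQ. LBr s t \<in> QQ}"
    proof (simp, intro ballI)
      fix t assume t: "t \<in> QQ"
      have q1: "LBr a (LBr b t) \<in> QQ" using ha hb t by simp
      have q2: "LBr b (LBr a t) \<in> QQ" using ha hb t by simp
      have "LAdd (LBr a (LBr b t)) (LSmul (-1) (LBr b (LBr a t))) \<in> QQ"
        by (rule csd_addneg[OF csd_QQ q1 q2])
      then show "LBr (LBr a b) t \<in> QQ" by (rule csd_cong[OF csd_QQ lc_br_left_expand])
    qed
  qed
  then show ?thesis using t by simp
qed

lemma L3: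
  assumes x: "x \<in> E" and u: "lvars u \<subseteq> E"
  shows "LBr (LV x) u \<in> QQ"
proof -
  have "u \<in> {m. \<forall>t\<in>{LV x}. LBr t m \<in> QQ}"
  proof (rule term_induct_csd[OF csd_br_right[OF csd_QQ] _ _ u])
    fix y assume y: "y \<in> E"
    have "LBr (LV x) (LV y) \<in> QQ"
    proof (cases "\<exists>A\<in>AA. {x, y} \<subseteq> A")
      case True
      then obtain A where A: "A \<in> AA" "{x, y} \<subseteq> A" by auto
      obtain i where i: "i < k" "A \<in> BB i" using A_in_B[OF A(1)] by auto
      have AS: "A \<subseteq> SS i" by (rule in_S[OF i(2)])
      have "LBr (LV x) (LV y) \<in> brspan (SS i)" by (rule brspan.intros(1)) (use A(2) AS in auto)
      then show ?thesis by (intro QS_QQ QS.q_br[OF i(1)])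
    next
      case False
      then have "LBr (LV x) (LV y) \<in> RR" using R_rel_comm[OF x y] by auto
      then show ?thesis by (rule csd_zero_cong[OF csd_QQ lie_cong.rel])
    qed
    then show "LV y \<in> {m. \<forall>t\<in>{LV x}. LBr t m \<in> QQ}" by simp
  next
    fix a b assume ab: "lvars a \<subseteq> E" "lvars b \<subseteq> E"
      and ha: "a \<in> {m. \<forall>t\<in>{LV x}. LBr t m \<in> QQ}" and hb: "b \<in> {m. \<forall>t\<in>{LV x}. LBr t m \<in> QQ}"
    have pa: "LBr (LV x) a \<in> QQ" using ha by simp
    have pb: "LBr (LV x) b \<in> QQ" using hb by simp
    have "LBr b (LBr (LV x) a) \<in> QQ" by (rule L2[OF ab(2) pa])
    then have "LSmul (-1) (LBr b (LBr (LV x) a)) \<in> QQ" by (rule csd_smul[OF csd_QQ])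
    then have q1: "LBr (LBr (LV x) a) b \<in> QQ" by (rule csd_cong[OF csd_QQ lc_antisym])
    have q2: "LBr a (LBr (LV x) b) \<in> QQ" by (rule L2[OF ab(1) pb])
    have "LAdd (LBr (LBr (LV x) a) b) (LBr a (LBr (LV x) b)) \<in> QQ" by (rule csd_add[OF csd_QQ q1 q2])
    then have "LBr (LV x) (LBr a b) \<in> QQ" by (rule csd_cong[OF csd_QQ lc_jacobi2])
    then show "LBr a b \<in> {m. \<forall>t\<in>{LV x}. LBr t m \<in> QQ}" by simp
  qed
  then show ?thesis by simp
qed

lemma L4:
  assumes s: "lvars s \<subseteq> E"
  shows "\<forall>u\<in>{u. lvars u \<subseteq> E}. LBr s u \<in> QQ"
proof -
  have "s \<in> {s. \<forall>u\<in>{u. lvars u \<subseteq> E}. LBr s u \<in> QQ}"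
  proof (rule term_induct_csd[OF csd_br_left[OF csd_QQ] _ _ s])
    fix x assume x: "x \<in> E"
    show "LV x \<in> {s. \<forall>u\<in>{u. lvars u \<subseteq> E}. LBr s u \<in> QQ}" using L3[OF x] by simp
  next
    fix a b :: "('k, 'x) lterm" assume ab: "lvars a \<subseteq> E" "lvars b \<subseteq> E"
      and ha: "a \<in> {s. \<forall>u\<in>{u. lvars u \<subseteq> E}. LBr s u \<in> QQ}"
    have abQ: "LBr a b \<in> QQ" using ha ab by simp
    show "LBr a b \<in> {s. \<forall>u\<in>{u. lvars u \<subseteq> E}. LBr s u \<in> QQ}"
    proof (simp, intro allI impI)
      fix u :: "('k, 'x) lterm" assume u: "lvars u \<subseteq> E"
      have "LBr u (LBr a b) \<in> QQ" by (rule L2[OF u abQ])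
      then have "LSmul (-1) (LBr u (LBr a b)) \<in> QQ" by (rule csd_smul[OF csd_QQ])
      then show "LBr (LBr a b) u \<in> QQ" by (rule csd_cong[OF csd_QQ lc_antisym])
    qed
  qed
  then show ?thesis by simp
qed

lemma brspan_QQ: "t \<in> brspan E \<Longrightarrow> t \<in> QQ"
  by (rule brspan_induct_csd[OF csd_QQ]) (use L4 in auto)

fun ksum :: "nat \<Rightarrow> ('k, 'x) lterm \<Rightarrow> ('k, 'x) lterm" where
  "ksum 0 q = LZero"
| "ksum (Suc m) q = LAdd (ksum m q) (killout (SS m) q)"

lemma ksum_add: "lie_cong R (ksum m (LAdd a b)) (LAdd (ksum m a) (ksum m b))"
proof (induction m)
  case 0 show ?case by (simp add: lc_sym[OF lie_cong.add_zero])
next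
  case (Suc m)
  have "lie_cong R (ksum (Suc m) (LAdd a b))
     (LAdd (LAdd (ksum m a) (ksum m b)) (LAdd (killout (SS m) a) (killout (SS m) b)))"
    using Suc by (simp add: lie_cong.cong_add lie_cong.refl)
  also have "lie_cong R \<dots> (LAdd (LAdd (ksum m a) (killout (SS m) a)) (LAdd (ksum m b) (killout (SS m) b)))"
    by (rule lc_add_swap)
  finally show ?case by simp
qed

lemma ksum_smul: "lie_cong R (ksum m (LSmul c a)) (LSmul c (ksum m a))"
proof (induction m)
  case 0 show ?case by (simp add: lc_sym[OF lc_smul_LZero])
next
  case (Suc m)
  have "lie_cong R (ksum (Suc m) (LSmul c a)) (LAdd (LSmul c (ksum m a)) (LSmul c (killout (SS m) a)))"
    using Suc by (simp add: lie_cong.cong_add lie_cong.refl)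
  also have "lie_cong R \<dots> (LSmul c (LAdd (ksum m a) (killout (SS m) a)))"
    by (rule lc_sym[OF lie_cong.smul_add])
  finally show ?case by simp
qed

lemma ksum_zero_all: "(\<forall>j<m. lie_cong R (killout (SS j) q) LZero) \<Longrightarrow> lie_cong R (ksum m q) LZero"
  by (induction m) (auto simp: lie_cong.refl lc_zero_add)

lemma ksum_single:
  "i < m \<Longrightarrow> killout (SS i) q = q \<Longrightarrow> (\<forall>j<m. j \<noteq> i \<longrightarrow> lie_cong R (killout (SS j) q) LZero)
   \<Longrightarrow> lie_cong R (ksum m q) q"
proof (induction m)
  case 0 then show ?case by simp
next
  case (Suc m)
  show ?case
  proof (cases "i = m")
    case True
    have "lie_cong R (ksum m q) LZero" by (rule ksum_zero_all) (use Suc.prems True in auto)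
    then have "lie_cong R (ksum (Suc m) q) (LAdd LZero q)"
      using Suc.prems True by (simp add: lie_cong.cong_add lie_cong.refl)
    then show ?thesis by (rule lc_trans[OF _ lc_add_zero_l])
  next
    case False
    then have "lie_cong R (ksum m q) q" using Suc by auto
    moreover have "lie_cong R (killout (SS m) q) LZero" using Suc.prems False by auto
    ultimately have "lie_cong R (ksum (Suc m) q) (LAdd q LZero)" by (simp add: lie_cong.cong_add)
    then show ?thesis by (rule lc_trans[OF _ lie_cong.add_zero])
  qed
qed

lemma QS_decomp: "q \<in> QS \<Longrightarrow> \<exists>n\<in>NN. lie_cong RR q (LAdd (ksum k q) n)"
proof (induction rule: QS.induct)
  case (q_br i p)
  have pv: "lvars p \<subseteq> SS i" by (rule lvars_brspan[OF q_br(2)])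
  have kp: "killout (SS i) p = p" by (rule killout_id[OF pv])
  have others: "\<forall>j<k. j \<noteq> i \<longrightarrow> lie_cong RR (killout (SS j) p) LZero"
  proof (intro allI impI)
    fix j assume j: "j < k" and ji: "j \<noteq> i"
    have "lie_cong (RB j) (killout (SS j) p) LZero"
    proof (rule commuting_brspan)
      show "killout (SS j) p \<in> brspan (SS i \<inter> SS j)" by (rule killout_brspan[OF q_br(2)])
      show "\<forall>a\<in>SS i \<inter> SS j. \<forall>b\<in>SS i \<inter> SS j. a \<noteq> b \<longrightarrow> lie_cong (RB j) (LBr (LV a) (LV b)) LZero"
      proof (intro ballI impI)
        fix a b assume a: "a \<in> SS i \<inter> SS j" and b: "b \<in> SS i \<inter> SS j" and ab: "a \<noteq> b"
        have "\<forall>D\<in>BB j. \<not> {a, b} \<subseteq> D"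
        proof (intro ballI notI)
          fix D assume D: "D \<in> BB j" "{a, b} \<subseteq> D"
          have DA: "D \<in> AA" using B_sub[OF j] D(1) by (rule subsetD)
          have "D \<notin> BB i" using disj q_br(1) j ji D(1) by auto
          then have "a = b" using out_B_card[OF q_br(1) DA] D(2) a b by auto
          then show False using ab by simp
        qed
        then have "LBr (LV a) (LV b) \<in> RB j" using a b unfolding pres_rels_def by auto
        then show "lie_cong (RB j) (LBr (LV a) (LV b)) LZero" by (rule lie_cong.rel)
      qed
    qed
    then show "lie_cong RR (killout (SS j) p) LZero" by (rule RB_to_R[OF j])
  qed
  have "lie_cong RR (ksum k p) p" by (rule ksum_single[OF q_br(1) kp others])
  then have "lie_cong RR p (LAdd (ksum k p) LZero)"
    by (rule lc_trans[OF lc_sym[OF lie_cong.add_zero] lie_cong.cong_add[OF lc_sym lie_cong.refl]])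
  then show ?case using csd_zero[OF csd_NN] by auto
next
  case (q_id n)
  have "\<forall>j<k. lie_cong RR (killout (SS j) n) LZero"
    using kill_idspan[OF _ q_id] RB_to_R by blast
  then have "lie_cong RR (ksum k n) LZero" by (rule ksum_zero_all)
  then have "lie_cong RR n (LAdd (ksum k n) n)"
    by (rule lc_trans[OF lc_sym[OF lc_add_zero_l] lie_cong.cong_add[OF lc_sym lie_cong.refl]])
  moreover have "n \<in> NN" unfolding NN_def using q_id cl_incl by auto
  ultimately show ?case by auto
next
  case q_zero
  have "lie_cong RR (ksum k LZero) LZero" by (rule ksum_zero_all) (simp add: lie_cong.refl)
  then have "lie_cong RR LZero (LAdd (ksum k LZero) LZero)"
    by (rule lc_trans[OF lc_sym[OF lc_add_zero_l] lie_cong.cong_add[OF lc_sym lie_cong.refl]])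
  then show ?case using csd_zero[OF csd_NN] by auto
next
  case (q_add a b)
  then obtain na nb where n: "na \<in> NN" "nb \<in> NN"
    "lie_cong RR a (LAdd (ksum k a) na)" "lie_cong RR b (LAdd (ksum k b) nb)" by auto
  have "lie_cong RR (LAdd a b) (LAdd (LAdd (ksum k a) na) (LAdd (ksum k b) nb))"
    by (rule lie_cong.cong_add[OF n(3,4)])
  also have "lie_cong RR \<dots> (LAdd (LAdd (ksum k a) (ksum k b)) (LAdd na nb))" by (rule lc_add_swap)
  also have "lie_cong RR \<dots> (LAdd (ksum k (LAdd a b)) (LAdd na nb))"
    by (rule lie_cong.cong_add[OF lc_sym[OF ksum_add] lie_cong.refl])
  finally have c: "lie_cong RR (LAdd a b) (LAdd (ksum k (LAdd a b)) (LAdd na nb))" .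
  show ?case by (rule bexI[of _ "LAdd na nb"], rule c, rule csd_add[OF csd_NN n(1,2)])
next
  case (q_smul a c)
  then obtain na where n: "na \<in> NN" "lie_cong RR a (LAdd (ksum k a) na)" by auto
  have "lie_cong RR (LSmul c a) (LSmul c (LAdd (ksum k a) na))" by (rule lie_cong.cong_smul[OF n(2)])
  also have "lie_cong RR \<dots> (LAdd (LSmul c (ksum k a)) (LSmul c na))" by (rule lie_cong.smul_add)
  also have "lie_cong RR \<dots> (LAdd (ksum k (LSmul c a)) (LSmul c na))"
    by (rule lie_cong.cong_add[OF lc_sym[OF ksum_smul] lie_cong.refl])
  finally have cc: "lie_cong RR (LSmul c a) (LAdd (ksum k (LSmul c a)) (LSmul c na))" .
  show ?case by (rule bexI[of _ "LSmul c na"], rule cc, rule csd_smul[OF csd_NN n(1)])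
qed

lemma J_sub_ideal:
  assumes t: "t \<in> derived RR E" and ker: "\<forall>j<k. t \<in> proj_kernel E RA (BB j)"
  shows "t \<in> ideal_gen RR E GG"
proof -
  obtain b where b: "lvars t \<subseteq> E" "b \<in> brspan E" "lie_cong RR t b" using t unfolding derived_def by auto
  have "b \<in> QQ" by (rule brspan_QQ[OF b(2)])
  then obtain q where q: "q \<in> QS" "lie_cong RR b q" unfolding QQ_def cl_def by auto
  have tq: "lie_cong RR t q" by (rule lc_trans[OF b(3) q(2)])
  have "\<forall>j<k. lie_cong RR (killout (SS j) q) LZero"
  proof (intro allI impI)
    fix j assume j: "j < k"
    have k0: "lie_cong (RB j) (killout (SS j) t) LZero" using ker j unfolding proj_kernel_def by auto
    have "lie_cong (RB j) (killout (SS j) q) (killout (SS j) t)" by (rule kill_cong[OF j lc_sym[OF tq]])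
    then have "lie_cong (RB j) (killout (SS j) q) LZero" using k0 by (rule lc_trans)
    then show "lie_cong RR (killout (SS j) q) LZero" by (rule RB_to_R[OF j])
  qed
  then have ks: "lie_cong RR (ksum k q) LZero" by (rule ksum_zero_all)
  obtain n where n: "n \<in> NN" "lie_cong RR q (LAdd (ksum k q) n)" using QS_decomp[OF q(1)] by auto
  obtain s where s: "s \<in> idspan E GG" "lie_cong RR n s" using n(1) unfolding NN_def cl_def by auto
  have "lie_cong RR t (LAdd (ksum k q) n)" by (rule lc_trans[OF tq n(2)])
  also have "lie_cong RR \<dots> (LAdd LZero n)" by (rule lie_cong.cong_add[OF ks lie_cong.refl])
  also have "lie_cong RR \<dots> n" by (rule lc_add_zero_l)
  also have "lie_cong RR \<dots> s" by (rule s(2))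
  finally show ?thesis unfolding ideal_gen_def using b(1) s(1) by auto
qed

lemma idspan_zero:
  assumes "\<forall>g\<in>GG. lie_cong RR g LZero"
  shows "t \<in> idspan E GG \<Longrightarrow> lie_cong RR t LZero"
proof (induction rule: idspan.induct)
  case (1 g) then show ?case using assms by blast
next
  case 2 show ?case by (rule lie_cong.refl)
next
  case (3 s t) from 3(3,4) show ?case by (rule lc_zero_add)
next
  case (4 t a) from 4(2) show ?case by (rule lc_zero_smul)
next
  case (5 u s) from 5(3) show ?case by (rule lc_br_zr)
next
  case (6 u s) from 6(3) show ?case by (rule lc_br_zl)
qed

end


theorem mainTheorem3:
  fixes E :: "'x set" and \<A> :: "'x set set"
    and RA :: "'x set \<Rightarrow> ('k::field, 'x) lterm set"
    and k :: nat and \<B> :: "nat \<Rightarrow> 'x set set"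
  assumes "finite E"
    and "set_arrangement E \<A>"
    and "\<forall>A\<in>\<A>. RA A \<subseteq> derived {} A"
    and "replacement \<A> RA"
    and "\<forall>i<k. closed_in_arr (\<B> i) \<A>"
    and "\<forall>i<k. \<forall>j<k. i \<noteq> j \<longrightarrow> \<B> i \<inter> \<B> j = {}"
    and "(\<Union>i<k. \<B> i) = \<A>"
  defines "R \<equiv> pres_rels E \<A> RA"
    and "J \<equiv> {t \<in> derived (pres_rels E \<A> RA) E. \<forall>i<k. t \<in> proj_kernel E RA (\<B> i)}"
  shows "J = ideal_gen R E {LBr (LV x) (LBr (LV y) (LV z)) | x y z i.
              i < k \<and> y \<in> supp (\<B> i) \<and> z \<in> supp (\<B> i) \<and> x \<in> E - supp (\<B> i)}
    \<and> ((\<forall>t\<in>J. lie_cong R t LZero) \<longleftrightarrow>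
        (\<forall>i<k. \<forall>x y z. y \<in> supp (\<B> i) \<and> z \<in> supp (\<B> i) \<and> x \<in> E - supp (\<B> i)
            \<longrightarrow> lie_cong R (LBr (LV x) (LBr (LV y) (LV z))) LZero))
    \<and> (\<forall>i<k. proj_kernel E RA (\<B> i) = subalg_gen R E (E - supp (\<B> i)))"
proof -
  interpret a: arr_setup E \<A> RA k \<B>
    by (rule arr_setup.intro) (fact assms)+
  have G: "{LBr (LV x) (LBr (LV y) (LV z)) | x y z i.
              i < k \<and> y \<in> supp (\<B> i) \<and> z \<in> supp (\<B> i) \<and> x \<in> E - supp (\<B> i)} = a.GG"
    by (simp add: a.GG_def)
  have J1: "J = ideal_gen R E a.GG"
  proof
    show "J \<subseteq> ideal_gen R E a.GG"
    proof
      fix t assume "t \<in> J"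
      then have "t \<in> derived (pres_rels E \<A> RA) E" "\<forall>i<k. t \<in> proj_kernel E RA (\<B> i)"
        unfolding J_def by auto
      then show "t \<in> ideal_gen R E a.GG" unfolding R_def by (rule a.J_sub_ideal)
    qed
  next
    show "ideal_gen R E a.GG \<subseteq> J"
    proof
      fix t assume "t \<in> ideal_gen R E a.GG"
      then have "t \<in> ideal_gen (pres_rels E \<A> RA) E a.GG" unfolding R_def .
      then show "t \<in> J" unfolding J_def using a.ideal_sub_J by auto
    qed
  qed
  have P2: "(\<forall>t\<in>J. lie_cong R t LZero) \<longleftrightarrow>
        (\<forall>i<k. \<forall>x y z. y \<in> supp (\<B> i) \<and> z \<in> supp (\<B> i) \<and> x \<in> E - supp (\<B> i)
            \<longrightarrow> lie_cong R (LBr (LV x) (LBr (LV y) (LV z))) LZero)"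
  proof
    assume h: "\<forall>t\<in>J. lie_cong R t LZero"
    show "\<forall>i<k. \<forall>x y z. y \<in> supp (\<B> i) \<and> z \<in> supp (\<B> i) \<and> x \<in> E - supp (\<B> i)
            \<longrightarrow> lie_cong R (LBr (LV x) (LBr (LV y) (LV z))) LZero"
    proof (intro allI impI)
      fix i x y z assume i: "i < k" and c: "y \<in> supp (\<B> i) \<and> z \<in> supp (\<B> i) \<and> x \<in> E - supp (\<B> i)"
      have g: "LBr (LV x) (LBr (LV y) (LV z)) \<in> a.GG" unfolding a.GG_def using i c by blast
      note v = a.GG_vars[OF g]
      from v have "LBr (LV x) (LBr (LV y) (LV z)) \<in> ideal_gen R E a.GG"
        unfolding ideal_gen_def using idspan.intros(1)[OF g] lie_cong.refl by auto
      then show "lie_cong R (LBr (LV x) (LBr (LV y) (LV z))) LZero" using h J1 by auto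
    qed
  next
    assume h: "\<forall>i<k. \<forall>x y z. y \<in> supp (\<B> i) \<and> z \<in> supp (\<B> i) \<and> x \<in> E - supp (\<B> i)
            \<longrightarrow> lie_cong R (LBr (LV x) (LBr (LV y) (LV z))) LZero"
    have hg: "\<forall>g\<in>a.GG. lie_cong (pres_rels E \<A> RA) g LZero"
      using h unfolding a.GG_def R_def by auto
    show "\<forall>t\<in>J. lie_cong R t LZero"
    proof
      fix t assume "t \<in> J"
      then have "t \<in> ideal_gen R E a.GG" using J1 by simp
      then obtain s where s: "s \<in> idspan E a.GG" "lie_cong R t s" unfolding ideal_gen_def by auto
      have "lie_cong (pres_rels E \<A> RA) s LZero" by (rule a.idspan_zero[OF hg s(1)])
      then show "lie_cong R t LZero" using s(2) unfolding R_def by (rule lc_trans[rotated])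
    qed
  qed
  have P3: "\<forall>i<k. proj_kernel E RA (\<B> i) = subalg_gen R E (E - supp (\<B> i))"
    unfolding R_def using a.part3 by auto
  show ?thesis using J1 P2 P3 G by simp
qed


end
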